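(* Let $q$ be a prime power, $r\ge 2$ an integer with $(q,r)\neq(2,2)$, $n=(q^r-1)/(q-1)$, and let $\mathcal{C}\subseteq\mathbb{F}_q^n$ be the $q$-ary Hamming code of redundancy $r$ (of dimension $n-r$). Then $$\mathbb{E}[\mathcal{C}] = nH_n - \sum_{\ell=1}^{r} \frac{1}{\binom{n-1}{n-\ell}} \cdot \frac{1}{\ell!}\prod_{i=0}^{\ell-1}\frac{q^r-q^i}{q-1}.$$
   Context: The $q$-ary Hamming code of redundancy $r$ is the code in $\mathbb{F}_q^n$, $n=(q^r-1)/(q-1)$, whose parity-check matrix has as columns representatives of all nonzero vectors of $\mathbb{F}_q^r$ up to nonzero scalar multiples; its dual is the $r$-dimensional simplex code. $H_m=\sum_{i=1}^m 1/i$. For a linear code $\mathcal{C}$ of dimension $k$, $\mathbb{E}[\mathcal{C}]$ is $\mathbb{E}[G]$ for any generator matrix $G\in\mathbb{F}_q^{k\times n}$, the expected number of draws when columns of $G$ are drawn independently and uniformly at random from its $n$ columns (with repetition) until the drawn columns span $\mathbb{F}_q^k$. *)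

theory Defs
  imports "HOL-Analysis.Analysis" "HOL-Library.FuncSet"
begin

text \<open>Vectors in F^m are represented as functions nat => 'a vanishing from index m on.\<close>

definition fvec :: "nat \<Rightarrow> (nat \<Rightarrow> 'a::zero) set" where
  "fvec m = {v. \<forall>i\<ge>m. v i = 0}"

definition spans :: "nat \<Rightarrow> (nat \<Rightarrow> 'a::field) set \<Rightarrow> bool" where
  "spans m S \<longleftrightarrow> (\<forall>v\<in>fvec m. \<exists>c. v = (\<lambda>i. \<Sum>s\<in>S. c s * s i))"

text \<open>h 0, ..., h (n-1) are the columns of a parity-check matrix of the q-ary Hamming code
  of redundancy r: nonzero vectors of F^r, one representative of each nonzero vector up to
  nonzero scalar multiples.\<close>
definition hamming_pcm :: "nat \<Rightarrow> nat \<Rightarrow> (nat \<Rightarrow> nat \<Rightarrow> 'a::field) \<Rightarrow> bool" where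
  "hamming_pcm r n h \<longleftrightarrow>
     (\<forall>j<n. h j \<in> fvec r \<and> h j \<noteq> (\<lambda>_. 0)) \<and>
     (\<forall>v\<in>fvec r. v \<noteq> (\<lambda>_. 0) \<longrightarrow> (\<exists>!j. j < n \<and> (\<exists>c. c \<noteq> 0 \<and> v = (\<lambda>i. c * h j i))))"

definition code_of_pcm :: "nat \<Rightarrow> nat \<Rightarrow> (nat \<Rightarrow> nat \<Rightarrow> 'a::field) \<Rightarrow> (nat \<Rightarrow> 'a) set" where
  "code_of_pcm r n h = {x \<in> fvec n. \<forall>i<r. (\<Sum>j<n. h j i * x j) = 0}"

definition is_generator_matrix :: "nat \<Rightarrow> nat \<Rightarrow> (nat \<Rightarrow> nat \<Rightarrow> 'a::field) \<Rightarrow> (nat \<Rightarrow> 'a) set \<Rightarrow> bool" where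
  "is_generator_matrix k n g C \<longleftrightarrow>
     (\<forall>i<k. g i \<in> C) \<and>
     (\<forall>c. (\<forall>j. (\<Sum>i<k. c i * g i j) = 0) \<longrightarrow> (\<forall>i<k. c i = 0)) \<and>
     (\<forall>x\<in>C. \<exists>c. x = (\<lambda>j. \<Sum>i<k. c i * g i j))"

definition gcol :: "nat \<Rightarrow> (nat \<Rightarrow> nat \<Rightarrow> 'a::zero) \<Rightarrow> nat \<Rightarrow> nat \<Rightarrow> 'a" where
  "gcol k g j = (\<lambda>i. if i < k then g i j else 0)"

text \<open>Probability that, drawing column indices independently and uniformly from {0..<n},
  the drawn columns span F^k for the first time after exactly t draws (the outcome of t
  draws is a function d : {0..<t} -> {0..<n}, all n^t outcomes equally likely).\<close>
definition stop_prob :: "nat \<Rightarrow> nat \<Rightarrow> (nat \<Rightarrow> nat \<Rightarrow> 'a::field) \<Rightarrow> nat \<Rightarrow> real" where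
  "stop_prob k n g t =
     real (card {d \<in> {..<t} \<rightarrow>\<^sub>E {..<n}.
                  spans k ((\<lambda>s. gcol k g (d s)) ` {..<t}) \<and>
                  \<not> spans k ((\<lambda>s. gcol k g (d s)) ` {..<t - 1})}) / real n ^ t"

end

theory Submission
  imports Defs
begin


definition surjc :: "nat \<Rightarrow> nat set \<Rightarrow> nat" where
  "surjc t S = card {d \<in> {..<t} \<rightarrow>\<^sub>E S. d ` {..<t} = S}"

lemma surjc_0: "surjc 0 S = (if S = {} then 1 else 0)"
  unfolding surjc_def by auto

lemma image_upd_lessThan: "(g(m := y)) ` {..<m::nat} = g ` {..<m}"
  by (intro image_cong) simp_all

lemma filter_image: "{d \<in> f ` A. Q d} = f ` {a \<in> A. Q (f a)}"
  by auto

lemma PiE_Suc_image: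
  "{..<Suc t} \<rightarrow>\<^sub>E S = (\<lambda>(y, g). g(t := y)) ` (S \<times> ({..<t} \<rightarrow>\<^sub>E S))"
  using PiE_insert_eq[of t "{..<t}" "\<lambda>_. S"] by (simp add: lessThan_Suc)

lemma ins_eq: "y \<in> S \<Longrightarrow> A \<subseteq> S \<Longrightarrow> insert y A = S \<longleftrightarrow> A = S \<or> A = S - {y}"
  by auto

lemma PiE_restrict_img:
  assumes "T \<subseteq> S"
  shows "{g \<in> I \<rightarrow>\<^sub>E S. g ` I = T} = {g \<in> I \<rightarrow>\<^sub>E T. g ` I = T}"
proof (rule set_eqI, rule iffI)
  fix g assume "g \<in> {g \<in> I \<rightarrow>\<^sub>E S. g ` I = T}"
  then show "g \<in> {g \<in> I \<rightarrow>\<^sub>E T. g ` I = T}" by (auto simp: PiE_iff)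
next
  fix g assume "g \<in> {g \<in> I \<rightarrow>\<^sub>E T. g ` I = T}"
  then show "g \<in> {g \<in> I \<rightarrow>\<^sub>E S. g ` I = T}" using assms by (auto simp: PiE_iff)
qed

lemma image_subset_PiE: "g \<in> I \<rightarrow>\<^sub>E S \<Longrightarrow> g ` I \<subseteq> S"
  by (auto simp: PiE_iff)

lemma surjc_le: "finite S \<Longrightarrow> surjc t S \<le> card S ^ t"
proof -
  assume "finite S"
  have "surjc t S \<le> card ({..<t} \<rightarrow>\<^sub>E S)"
    unfolding surjc_def by (rule card_mono) (auto intro: finite_PiE \<open>finite S\<close>)
  also have "\<dots> = card S ^ t" by (simp add: card_PiE)
  finally show ?thesis .
qed

lemma surjc_Suc:
  assumes "finite S"
  shows "surjc (Suc t) S = (\<Sum>x\<in>S. surjc t S + surjc t (S - {x}))"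
proof -
  let ?f = "\<lambda>(y::nat, g::nat\<Rightarrow>nat). g(t := y)"
  let ?Q = "{p \<in> S \<times> ({..<t} \<rightarrow>\<^sub>E S). insert (fst p) (snd p ` {..<t}) = S}"
  have eq: "{d \<in> {..<Suc t} \<rightarrow>\<^sub>E S. d ` {..<Suc t} = S} = ?f ` ?Q"
  proof -
    have "{d \<in> {..<Suc t} \<rightarrow>\<^sub>E S. d ` {..<Suc t} = S}
        = {d \<in> ?f ` (S \<times> ({..<t} \<rightarrow>\<^sub>E S)). d ` {..<Suc t} = S}"
      by (simp add: PiE_Suc_image)
    also have "\<dots> = ?f ` {p \<in> S \<times> ({..<t} \<rightarrow>\<^sub>E S). ?f p ` {..<Suc t} = S}"
      by (rule filter_image)
    also have "\<dots> = ?f ` ?Q"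
    proof -
      have "?f p ` {..<Suc t} = insert (fst p) (snd p ` {..<t})" for p
        by (cases p) (simp add: lessThan_Suc image_upd_lessThan Int_absorb2 subset_eq)
      then show ?thesis by simp
    qed
    finally show ?thesis .
  qed
  have inj: "inj_on ?f ?Q"
    by (rule inj_on_subset[OF inj_combinator[of t "{..<t}" "\<lambda>_. S"]]) auto
  have Qeq: "?Q = Sigma S (\<lambda>y. {g \<in> {..<t} \<rightarrow>\<^sub>E S. g ` {..<t} = S} \<union>
                             {g \<in> {..<t} \<rightarrow>\<^sub>E (S - {y}). g ` {..<t} = S - {y}})"
  proof (rule set_eqI)
    fix p :: "nat \<times> (nat \<Rightarrow> nat)"
    obtain y g where p: "p = (y, g)" by (cases p)
    show "p \<in> ?Q \<longleftrightarrow> p \<in> Sigma S (\<lambda>y. {g \<in> {..<t} \<rightarrow>\<^sub>E S. g ` {..<t} = S} \<union>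
                             {g \<in> {..<t} \<rightarrow>\<^sub>E (S - {y}). g ` {..<t} = S - {y}})"
      unfolding p using PiE_restrict_img[of "S - {y}" S "{..<t}"] ins_eq[of y S "g ` {..<t}"]
        image_subset_PiE[of g "{..<t}" S]
      by auto
  qed
  have fin: "finite ({..<t} \<rightarrow>\<^sub>E T)" if "finite T" for T :: "nat set"
    using that by (intro finite_PiE) auto
  have fin2: "finite {g \<in> {..<t} \<rightarrow>\<^sub>E T. Q g}" if "finite T" for T :: "nat set" and Q
    by (rule finite_subset[OF _ fin[OF that]]) auto
  have "surjc (Suc t) S = card ?Q"
    unfolding surjc_def eq using inj by (simp add: card_image)
  also have "\<dots> = (\<Sum>y\<in>S. card ({g \<in> {..<t} \<rightarrow>\<^sub>E S. g ` {..<t} = S} \<union>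
                             {g \<in> {..<t} \<rightarrow>\<^sub>E (S - {y}). g ` {..<t} = S - {y}}))"
    unfolding Qeq using assms by (subst card_SigmaI) (auto intro!: fin2)
  also have "\<dots> = (\<Sum>x\<in>S. surjc t S + surjc t (S - {x}))"
  proof (rule sum.cong[OF refl])
    fix y assume "y \<in> S"
    have "{g \<in> {..<t} \<rightarrow>\<^sub>E S. g ` {..<t} = S} \<inter>
          {g \<in> {..<t} \<rightarrow>\<^sub>E (S - {y}). g ` {..<t} = S - {y}} = {}"
      using \<open>y \<in> S\<close> by auto
    then show "card ({g \<in> {..<t} \<rightarrow>\<^sub>E S. g ` {..<t} = S} \<union>
                  {g \<in> {..<t} \<rightarrow>\<^sub>E (S - {y}). g ` {..<t} = S - {y}}) = surjc t S + surjc t (S - {y})"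
      unfolding surjc_def using assms by (subst card_Un_disjoint) (auto intro!: fin2)
  qed
  finally show ?thesis .
qed


lemma surjc_empty: "surjc t {} = (if t = 0 then 1 else 0)"
proof (cases t)
  case 0 then show ?thesis by (simp add: surjc_0)
next
  case (Suc m)
  then have "{..<t} \<rightarrow>\<^sub>E ({}::nat set) = {}" by (auto simp: PiE_eq_empty_iff)
  then show ?thesis using Suc unfolding surjc_def by simp
qed

definition wt :: "nat \<Rightarrow> nat \<Rightarrow> real" where
  "wt n j = fact j * fact (n - 1 - j) / fact (n - 1)"

lemma b_bound:
  assumes "finite S"
  shows "norm (real (surjc t S) / real n ^ t) \<le> (real (card S) / real n) ^ t"
proof -
  have "real (surjc t S) \<le> real (card S) ^ t"
    using surjc_le[OF assms, of t] by (metis of_nat_le_iff of_nat_power)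
  then show ?thesis by (simp add: power_divide divide_right_mono)
qed

lemma b_summable:
  assumes "finite S" "card S < n"
  shows "summable (\<lambda>t. real (surjc t S) / real n ^ t)"
proof (rule summable_comparison_test'[OF summable_geometric])
  show "norm (real (card S) / real n) < 1" using assms by auto
  show "norm (real (surjc t S) / real n ^ t) \<le> (real (card S) / real n) ^ t" for t
    by (rule b_bound[OF assms(1)])
qed

lemma b_tn0:
  assumes "finite S" "card S < n"
  shows "(\<lambda>t. real t * (real (surjc t S) / real n ^ t)) \<longlonglongrightarrow> 0"
proof (rule Lim_null_comparison)
  show "(\<lambda>t. real t * (real (card S) / real n) ^ t) \<longlonglongrightarrow> 0"
    by (rule powser_times_n_limit_0) (use assms in auto)
  show "\<forall>\<^sub>F t in sequentially. norm (real t * (real (surjc t S) / real n ^ t))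
          \<le> real t * (real (card S) / real n) ^ t"
  proof (intro always_eventually allI)
    fix t
    have "norm (real t * (real (surjc t S) / real n ^ t)) = real t * norm (real (surjc t S) / real n ^ t)"
      by (simp add: norm_mult)
    also have "\<dots> \<le> real t * (real (card S) / real n) ^ t"
      by (rule mult_left_mono[OF b_bound[OF assms(1)]]) simp
    finally show "norm (real t * (real (surjc t S) / real n ^ t)) \<le> real t * (real (card S) / real n) ^ t" .
  qed
qed

lemma aux_cancel: "(m::real) > 0 \<Longrightarrow> c * x * A / F = c * (x * m * A / F) / m"
  by (simp add: field_simps)

lemma b_sums:
  assumes n: "n \<ge> 1"
  shows "finite S \<Longrightarrow> card S = j \<Longrightarrow> j < n \<Longrightarrow>
         (\<lambda>t. real (surjc t S) / real n ^ t) sums wt n j"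
proof (induction j arbitrary: S)
  case 0
  then have "S = {}" by auto
  have e: "(\<lambda>t. real (surjc t S) / real n ^ t) = (\<lambda>t. if t = 0 then 1 else 0)"
    using \<open>S = {}\<close> by (auto simp: surjc_empty)
  have "(\<lambda>t. if t = 0 then 1 else 0) sums (1::real)"
    using sums_single[of 0 "\<lambda>_. 1::real"] by simp
  moreover have "wt n 0 = 1" unfolding wt_def by simp
  ultimately show ?case by (simp add: e)
next
  case (Suc j)
  let ?b = "\<lambda>S t. real (surjc t S) / real n ^ t"
  have fin: "finite S" and cS: "card S = Suc j" and jn: "Suc j < n" using Suc.prems by auto
  have Sne: "S \<noteq> {}" using cS by auto
  have summ: "summable (?b S)" using b_summable fin cS jn by auto
  define s where "s = suminf (?b S)"
  have bs: "?b S sums s" using summ s_def summable_sums by blast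
  have b0: "?b S 0 = 0" using Sne by (simp add: surjc_0)
  have IH: "?b (S - {x}) sums wt n j" if "x \<in> S" for x
    using Suc.IH[of "S - {x}"] that fin cS jn by auto
  have rec: "?b S (Suc t) = real (card S) / real n * ?b S t + 1 / real n * (\<Sum>x\<in>S. ?b (S - {x}) t)" for t
  proof -
    have "real (surjc (Suc t) S) = real (card S) * real (surjc t S) + (\<Sum>x\<in>S. real (surjc t (S - {x})))"
      by (simp add: surjc_Suc[OF fin] sum.distrib)
    then show ?thesis using n by (simp add: sum_divide_distrib[symmetric] field_simps)
  qed
  have "(\<lambda>t. real (card S) / real n * ?b S t + 1 / real n * (\<Sum>x\<in>S. ?b (S - {x}) t)) sums
        (real (card S) / real n * s + 1 / real n * (\<Sum>x\<in>S. wt n j))"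
    by (intro sums_add sums_mult sums_sum IH bs)
  then have "(\<lambda>t. ?b S (Suc t)) sums (real (card S) / real n * s + 1 / real n * (\<Sum>x\<in>S. wt n j))"
    by (simp only: rec)
  then have "(\<lambda>t. ?b S (Suc t)) sums (real (card S) / real n * s + 1 / real n * (real (card S) * wt n j))"
    by simp
  moreover have "(\<lambda>t. ?b S (Suc t)) sums s" using bs b0 sums_Suc_iff[of "?b S" s] by simp
  ultimately have eq: "s = real (card S) / real n * s + 1 / real n * (real (card S) * wt n j)"
    using sums_unique2 by blast
  have "real n * s = real n * (real (card S) / real n * s + 1 / real n * (real (card S) * wt n j))"
    using eq by simp
  also have "\<dots> = real (card S) * s + real (card S) * wt n j"
    using n by (simp add: field_simps)
  finally have "s * (real n - real (Suc j)) = real (Suc j) * wt n j"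
    using cS by (simp add: algebra_simps)
  then have s_eq: "s = real (Suc j) * wt n j / (real n - real (Suc j))"
    using jn by (simp add: field_simps)
  have f1: "fact (n - 1 - j) = real (n - 1 - j) * fact (n - 1 - Suc j)"
  proof -
    have "n - 1 - j = Suc (n - 1 - Suc j)" using jn by simp
    then show ?thesis by (metis fact_Suc of_nat_Suc of_nat_fact)
  qed
  have d: "real (n - 1 - j) = real n - real (Suc j)" using jn by (simp add: of_nat_diff)
  have pos: "real n - real (Suc j) > 0" using jn by simp
  have wj: "wt n j = fact j * (real n - real (Suc j)) * fact (n - 1 - Suc j) / fact (n - 1)"
    unfolding wt_def f1 d by simp
  have wj1: "wt n (Suc j) = real (Suc j) * fact j * fact (n - 1 - Suc j) / fact (n - 1)"
    unfolding wt_def by (simp add: fact_Suc)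
  have "wt n (Suc j) = real (Suc j) * wt n j / (real n - real (Suc j))"
    unfolding wj wj1 using pos aux_cancel by blast
  then show ?case using s_eq bs by simp
qed

lemma telescope:
  fixes b :: "nat \<Rightarrow> real"
  assumes "b sums s" "(\<lambda>t. real t * b t) \<longlonglongrightarrow> 0"
  shows "(\<lambda>t. real t * (b (t - 1) - b t)) sums s"
proof -
  have ps: "(\<Sum>t<Suc T. real t * (b (t - 1) - b t)) = (\<Sum>t<T. b t) - real T * b T" for T
    by (induction T) (auto simp: algebra_simps)
  have "(\<lambda>T. (\<Sum>t<T. b t) - real T * b T) \<longlonglongrightarrow> s - 0"
    using assms unfolding sums_def by (intro tendsto_diff)
  then have L: "(\<lambda>T. (\<Sum>t<Suc T. real t * (b (t - 1) - b t))) \<longlonglongrightarrow> s"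
    by (simp only: ps diff_zero)
  have "(\<lambda>T. \<Sum>t<T. real t * (b (t - 1) - b t)) \<longlonglongrightarrow> s"
    using LIMSEQ_imp_Suc[of "\<lambda>T. \<Sum>t<T. real t * (b (t - 1) - b t)" s] L by blast
  then show ?thesis unfolding sums_def .
qed


lemma prob_main:
  assumes n: "n \<ge> 1"
    and mono: "\<And>A B. A \<subseteq> B \<Longrightarrow> B \<subseteq> {..<n} \<Longrightarrow> P A \<Longrightarrow> P B"
    and full: "P {..<n}"
  shows "(\<lambda>t. real t * (real (card {d \<in> {..<t} \<rightarrow>\<^sub>E {..<n}. P (d ` {..<t}) \<and> \<not> P (d ` {..<t - 1})})
            / real n ^ t)) sums (\<Sum>S\<in>{S. S \<subseteq> {..<n} \<and> \<not> P S}. wt n (card S))"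
proof -
  define F where "F = {S. S \<subseteq> {..<n} \<and> \<not> P S}"
  have finF: "finite F" unfolding F_def by (rule finite_subset[of _ "Pow {..<n}"]) auto
  have Fprops: "finite S \<and> card S < n" if "S \<in> F" for S
  proof -
    have sub: "S \<subseteq> {..<n}" and nP: "\<not> P S" using that unfolding F_def by auto
    then have fS: "finite S" using finite_subset by blast
    have "card S \<le> n" using card_mono[OF _ sub] by simp
    moreover have "card S \<noteq> n"
    proof
      assume "card S = n"
      then have "S = {..<n}" using card_subset_eq[OF _ sub] by simp
      then show False using nP full by simp
    qed
    ultimately show ?thesis using fS by simp
  qed
  have finPiE: "finite ({..<t} \<rightarrow>\<^sub>E T)" if "finite T" for t :: nat and T :: "nat set"
    using that by (intro finite_PiE) auto
  define Nc where "Nc (t::nat) = card {d \<in> {..<t} \<rightarrow>\<^sub>E {..<n}. \<not> P (d ` {..<t})}" for t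
  have NcEq: "Nc t = (\<Sum>S\<in>F. surjc t S)" for t :: nat
  proof -
    have seteq: "{d \<in> {..<t} \<rightarrow>\<^sub>E {..<n}. \<not> P (d ` {..<t})}
        = (\<Union>S\<in>F. {d \<in> {..<t} \<rightarrow>\<^sub>E S. d ` {..<t} = S})"
    proof (rule set_eqI, rule iffI)
      fix d assume d: "d \<in> {d \<in> {..<t} \<rightarrow>\<^sub>E {..<n}. \<not> P (d ` {..<t})}"
      then have "d ` {..<t} \<in> F" unfolding F_def using image_subset_PiE by auto
      moreover have "d \<in> {..<t} \<rightarrow>\<^sub>E d ` {..<t}" using d by (auto simp: PiE_iff)
      ultimately show "d \<in> (\<Union>S\<in>F. {d \<in> {..<t} \<rightarrow>\<^sub>E S. d ` {..<t} = S})" by blast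
    next
      fix d assume "d \<in> (\<Union>S\<in>F. {d \<in> {..<t} \<rightarrow>\<^sub>E S. d ` {..<t} = S})"
      then obtain S where S: "S \<in> F" "d \<in> {..<t} \<rightarrow>\<^sub>E S" "d ` {..<t} = S" by blast
      then have "S \<subseteq> {..<n}" "\<not> P S" unfolding F_def by auto
      then show "d \<in> {d \<in> {..<t} \<rightarrow>\<^sub>E {..<n}. \<not> P (d ` {..<t})}"
        using S PiE_mono[of "{..<t}" "\<lambda>_. S" "\<lambda>_. {..<n}"] by auto
    qed
    show ?thesis unfolding Nc_def seteq surjc_def
    proof (rule card_UN_disjoint[OF finF])
      show "\<forall>S\<in>F. finite {d \<in> {..<t} \<rightarrow>\<^sub>E S. d ` {..<t} = S}"
        using Fprops finPiE by auto
      show "\<forall>S\<in>F. \<forall>T\<in>F. S \<noteq> T \<longrightarrow> {d \<in> {..<t} \<rightarrow>\<^sub>E S. d ` {..<t} = S} \<inter> {d \<in> {..<t} \<rightarrow>\<^sub>E T. d ` {..<t} = T} = {}"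
        by blast
    qed
  qed
  define SC where "SC (t::nat) = card {d \<in> {..<t} \<rightarrow>\<^sub>E {..<n}. P (d ` {..<t}) \<and> \<not> P (d ` {..<t - 1})}" for t
  have SCeq: "SC (Suc m) + Nc (Suc m) = n * Nc m" for m
  proof -
    let ?f = "\<lambda>(y::nat, g::nat\<Rightarrow>nat). g(m := y)"
    define X where "X = {d \<in> {..<Suc m} \<rightarrow>\<^sub>E {..<n}. \<not> P (d ` {..<m})}"
    have "X = {d \<in> ?f ` ({..<n} \<times> ({..<m} \<rightarrow>\<^sub>E {..<n})). \<not> P (d ` {..<m})}"
      unfolding X_def by (simp add: PiE_Suc_image)
    also have "\<dots> = ?f ` {p \<in> {..<n} \<times> ({..<m} \<rightarrow>\<^sub>E {..<n}). \<not> P (?f p ` {..<m})}"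
      by (rule filter_image)
    also have "\<dots> = ?f ` ({..<n} \<times> {g \<in> {..<m} \<rightarrow>\<^sub>E {..<n}. \<not> P (g ` {..<m})})"
    proof -
      have "?f p ` {..<m} = snd p ` {..<m}" for p
        by (cases p) (simp add: image_upd_lessThan)
      then show ?thesis by auto
    qed
    finally have Xeq: "X = ?f ` ({..<n} \<times> {g \<in> {..<m} \<rightarrow>\<^sub>E {..<n}. \<not> P (g ` {..<m})})" .
    have inj: "inj_on ?f ({..<n} \<times> {g \<in> {..<m} \<rightarrow>\<^sub>E {..<n}. \<not> P (g ` {..<m})})"
      by (rule inj_on_subset[OF inj_combinator[of m "{..<m}" "\<lambda>_. {..<n}"]]) auto
    have cX: "card X = n * Nc m"
      unfolding Xeq Nc_def using inj by (simp add: card_image card_cartesian_product)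
    define A1 where "A1 = {d \<in> {..<Suc m} \<rightarrow>\<^sub>E {..<n}. P (d ` {..<Suc m}) \<and> \<not> P (d ` {..<m})}"
    define A2 where "A2 = {d \<in> {..<Suc m} \<rightarrow>\<^sub>E {..<n}. \<not> P (d ` {..<Suc m})}"
    have "X = A1 \<union> A2"
    proof (rule set_eqI, rule iffI)
      fix d assume "d \<in> X" then show "d \<in> A1 \<union> A2" unfolding X_def A1_def A2_def by auto
    next
      fix d assume d: "d \<in> A1 \<union> A2"
      show "d \<in> X"
      proof (cases "d \<in> A1")
        case True then show ?thesis unfolding X_def A1_def by auto
      next
        case False
        then have d2: "d \<in> {..<Suc m} \<rightarrow>\<^sub>E {..<n}" "\<not> P (d ` {..<Suc m})" using d unfolding A2_def by auto
        have "d ` {..<Suc m} \<subseteq> {..<n}" using image_subset_PiE[OF d2(1)] .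
        moreover have "d ` {..<m} \<subseteq> d ` {..<Suc m}" by auto
        ultimately have "\<not> P (d ` {..<m})" using mono d2(2) by blast
        then show ?thesis using d2 unfolding X_def by auto
      qed
    qed
    moreover have "A1 \<inter> A2 = {}" unfolding A1_def A2_def by auto
    moreover have "finite A1" "finite A2" unfolding A1_def A2_def
      by (rule finite_subset[OF _ finPiE[of "{..<n}" "Suc m"]]; auto)+
    ultimately have "card X = card A1 + card A2" by (simp add: card_Un_disjoint)
    moreover have "card A1 = SC (Suc m)" unfolding A1_def SC_def by simp
    moreover have "card A2 = Nc (Suc m)" unfolding A2_def Nc_def by simp
    ultimately show ?thesis using cX by simp
  qed
  let ?b = "\<lambda>S t. real (surjc t S) / real n ^ t"
  have key: "real t * (real (SC t) / real n ^ t) = (\<Sum>S\<in>F. real t * (?b S (t - 1) - ?b S t))" for t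
  proof (cases t)
    case 0 then show ?thesis by simp
  next
    case (Suc m)
    have "real (SC (Suc m)) = real n * real (Nc m) - real (Nc (Suc m))"
      using SCeq[of m] by (metis add_diff_cancel_right' of_nat_add of_nat_mult)
    then have "real (SC t) / real n ^ t = real (Nc m) / real n ^ m - real (Nc (Suc m)) / real n ^ Suc m"
      using Suc n by (simp add: field_simps)
    also have "\<dots> = (\<Sum>S\<in>F. ?b S m - ?b S (Suc m))"
      by (simp add: NcEq sum_subtractf sum_divide_distrib)
    finally show ?thesis using Suc by (simp add: sum_distrib_left)
  qed
  have "(\<lambda>t. \<Sum>S\<in>F. real t * (?b S (t - 1) - ?b S t)) sums (\<Sum>S\<in>F. wt n (card S))"
  proof (rule sums_sum)
    fix S assume "S \<in> F"
    then have "finite S" "card S < n" using Fprops by auto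
    then show "(\<lambda>t. real t * (?b S (t - 1) - ?b S t)) sums wt n (card S)"
      using telescope b_sums[OF n] b_tn0 by blast
  qed
  then show ?thesis unfolding F_def[symmetric] using key unfolding SC_def by simp
qed



lemma annihilator:
  fixes f :: "'b \<Rightarrow> nat \<Rightarrow> 'a::field"
  assumes "finite S"
  shows "(\<forall>s\<in>S. f s \<in> fvec k) \<Longrightarrow>
    (\<forall>v\<in>fvec k. \<exists>c. v = (\<lambda>i. \<Sum>s\<in>S. c s * f s i)) \<or>
    (\<exists>c. (\<exists>i<k. c i \<noteq> 0) \<and> (\<forall>s\<in>S. (\<Sum>i<k. c i * f s i) = 0))"
proof (induction k arbitrary: f)
  case 0
  have "\<exists>c. v = (\<lambda>i. \<Sum>s\<in>S. c s * f s i)" if "v \<in> fvec 0" for v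
  proof
    show "v = (\<lambda>i. \<Sum>s\<in>S. 0 * f s i)" using that by (auto simp: fvec_def)
  qed
  then show ?case by blast
next
  case (Suc k)
  show ?case
  proof (cases "\<forall>s\<in>S. f s k = 0")
    case True
    let ?c = "\<lambda>i. if i = k then (1::'a) else 0"
    have "(\<Sum>i<Suc k. ?c i * f s i) = f s k" for s
      by (simp add: if_distrib sum.delta cong: if_cong)
    then have "\<forall>s\<in>S. (\<Sum>i<Suc k. ?c i * f s i) = 0" using True by simp
    moreover have "\<exists>i<Suc k. ?c i \<noteq> 0" by auto
    ultimately have "(\<exists>i<Suc k. ?c i \<noteq> 0) \<and> (\<forall>s\<in>S. (\<Sum>i<Suc k. ?c i * f s i) = 0)" by blast
    then show ?thesis by (intro disjI2 exI[of _ ?c])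
  next
    case False
    then obtain s0 where s0: "s0 \<in> S" "f s0 k \<noteq> 0" by blast
    define a where "a = f s0 k"
    have a: "a \<noteq> 0" using s0 a_def by simp
    define f' where "f' s = (\<lambda>i. f s i - (f s k / a) * f s0 i)" for s
    have f'k: "\<forall>s\<in>S. f' s \<in> fvec k"
    proof
      fix s assume "s \<in> S"
      then have fs: "f s \<in> fvec (Suc k)" "f s0 \<in> fvec (Suc k)" using Suc.prems s0 by auto
      show "f' s \<in> fvec k" unfolding fvec_def
      proof (intro CollectI allI impI)
        fix i assume "k \<le> i"
        show "f' s i = 0"
        proof (cases "i = k")
          case True then show ?thesis using a unfolding f'_def a_def by simp
        next
          case False then have "Suc k \<le> i" using \<open>k \<le> i\<close> by simp
          then show ?thesis using fs unfolding f'_def fvec_def by simp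
        qed
      qed
    qed
    from Suc.IH[of f', OF f'k] show ?thesis
    proof
      assume L: "\<forall>v\<in>fvec k. \<exists>c. v = (\<lambda>i. \<Sum>s\<in>S. c s * f' s i)"
      have "\<exists>c. v = (\<lambda>i. \<Sum>s\<in>S. c s * f s i)" if v: "v \<in> fvec (Suc k)" for v
      proof -
        define lam where "lam = v k / a"
        define v' where "v' = (\<lambda>i. v i - lam * f s0 i)"
        have "v' \<in> fvec k" unfolding fvec_def
        proof (intro CollectI allI impI)
          fix i assume "k \<le> i"
          show "v' i = 0"
          proof (cases "i = k")
            case True then show ?thesis using a unfolding v'_def lam_def a_def by simp
          next
            case False then have "Suc k \<le> i" using \<open>k \<le> i\<close> by simp
            then show ?thesis using v s0 Suc.prems unfolding v'_def fvec_def by auto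
          qed
        qed
        then obtain c where c: "v' = (\<lambda>i. \<Sum>s\<in>S. c s * f' s i)" using L by blast
        define mu where "mu = lam - (\<Sum>s\<in>S. c s * f s k) / a"
        define c2 where "c2 s = c s + (if s = s0 then mu else 0)" for s
        have "v = (\<lambda>i. \<Sum>s\<in>S. c2 s * f s i)"
        proof
          fix i
          have "v i = v' i + lam * f s0 i" unfolding v'_def by simp
          also have "v' i = (\<Sum>s\<in>S. c s * f s i) - (\<Sum>s\<in>S. c s * f s k) / a * f s0 i"
            using fun_cong[OF c, of i] unfolding f'_def
            by (simp add: right_diff_distrib sum_subtractf sum_distrib_right sum_divide_distrib mult.assoc)
          finally have "v i = (\<Sum>s\<in>S. c s * f s i) + mu * f s0 i"
            unfolding mu_def by (simp add: algebra_simps)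
          also have "\<dots> = (\<Sum>s\<in>S. c2 s * f s i)"
          proof -
            have "c2 s * f s i = c s * f s i + (if s = s0 then mu * f s0 i else 0)" for s
              unfolding c2_def by (simp add: distrib_right)
            then have "(\<Sum>s\<in>S. c2 s * f s i) = (\<Sum>s\<in>S. c s * f s i) + (\<Sum>s\<in>S. if s = s0 then mu * f s0 i else 0)"
              by (simp add: sum.distrib)
            also have "(\<Sum>s\<in>S. if s = s0 then mu * f s0 i else 0) = mu * f s0 i"
              using s0 assms by (simp add: sum.delta)
            finally show ?thesis by simp
          qed
          finally show "v i = (\<Sum>s\<in>S. c2 s * f s i)" .
        qed
        then show ?thesis by blast
      qed
      then show ?thesis by blast
    next
      assume "\<exists>c. (\<exists>i<k. c i \<noteq> 0) \<and> (\<forall>s\<in>S. (\<Sum>i<k. c i * f' s i) = 0)"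
      then obtain c' where c'1: "\<exists>i<k. c' i \<noteq> 0" and c'2: "\<forall>s\<in>S. (\<Sum>i<k. c' i * f' s i) = 0"
        by blast
      define D where "D = (\<Sum>i<k. c' i * f s0 i)"
      define c where "c i = (if i < k then c' i else if i = k then - D / a else 0)" for i
      have "(\<Sum>i<Suc k. c i * f s i) = 0" if "s \<in> S" for s
      proof -
        have e1: "(\<Sum>i<k. c' i * f' s i) = (\<Sum>i<k. c' i * f s i) - f s k / a * D"
          unfolding f'_def D_def
          by (simp add: right_diff_distrib sum_subtractf sum_distrib_left algebra_simps)
        have "(\<Sum>i<Suc k. c i * f s i) = (\<Sum>i<k. c' i * f s i) + (- D / a) * f s k"
          unfolding c_def by simp
        also have "\<dots> = 0" using e1 c'2 that by (simp add: field_simps)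
        finally show ?thesis .
      qed
      moreover have "\<exists>i<Suc k. c i \<noteq> 0" using c'1 unfolding c_def by auto
      ultimately have "(\<exists>i<Suc k. c i \<noteq> 0) \<and> (\<forall>s\<in>S. (\<Sum>i<Suc k. c i * f s i) = 0)" by blast
      then show ?thesis by (intro disjI2 exI[of _ c])
    qed
  qed
qed


lemma spans_iff:
  fixes f :: "'b \<Rightarrow> nat \<Rightarrow> 'a::field"
  assumes fA: "finite A"
  shows "spans m (f ` A) \<longleftrightarrow> (\<forall>v\<in>fvec m. \<exists>c. v = (\<lambda>i. \<Sum>a\<in>A. c a * f a i))"
proof
  assume sp: "spans m (f ` A)"
  show "\<forall>v\<in>fvec m. \<exists>c. v = (\<lambda>i. \<Sum>a\<in>A. c a * f a i)"
  proof
    fix v :: "nat \<Rightarrow> 'a" assume "v \<in> fvec m"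
    then obtain c where c: "v = (\<lambda>i. \<Sum>s\<in>f ` A. c s * s i)" using sp unfolding spans_def by blast
    define R where "R = inv_into A f ` (f ` A)"
    have RA: "R \<subseteq> A" unfolding R_def by (auto intro: inv_into_into)
    have injR: "inj_on f R" unfolding R_def by (rule inj_onI) (auto simp: f_inv_into_f)
    have fR: "f ` R = f ` A"
    proof
      show "f ` R \<subseteq> f ` A" using RA by blast
      show "f ` A \<subseteq> f ` R"
      proof
        fix y assume y: "y \<in> f ` A"
        then have "f (inv_into A f y) = y" by (rule f_inv_into_f)
        moreover have "inv_into A f y \<in> R" unfolding R_def using y by blast
        ultimately show "y \<in> f ` R" by (metis imageI)
      qed
    qed
    define c' where "c' a = (if a \<in> R then c (f a) else 0)" for a
    have "v = (\<lambda>i. \<Sum>a\<in>A. c' a * f a i)"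
    proof
      fix i
      have "(\<Sum>a\<in>A. c' a * f a i) = (\<Sum>a\<in>A. if a \<in> R then c (f a) * f a i else 0)"
        unfolding c'_def by (rule sum.cong) auto
      also have "\<dots> = (\<Sum>a\<in>A \<inter> R. c (f a) * f a i)" using fA by (simp add: sum.inter_restrict)
      also have "A \<inter> R = R" using RA by auto
      also have "(\<Sum>a\<in>R. c (f a) * f a i) = (\<Sum>s\<in>f ` R. c s * s i)"
        using injR by (simp add: sum.reindex)
      finally show "v i = (\<Sum>a\<in>A. c' a * f a i)" using c fR by simp
    qed
    then show "\<exists>c. v = (\<lambda>i. \<Sum>a\<in>A. c a * f a i)" by blast
  qed
next
  assume R: "\<forall>v\<in>fvec m. \<exists>c. v = (\<lambda>i. \<Sum>a\<in>A. c a * f a i)"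
  show "spans m (f ` A)" unfolding spans_def
  proof
    fix v :: "nat \<Rightarrow> 'a" assume "v \<in> fvec m"
    then obtain c where c: "v = (\<lambda>i. \<Sum>a\<in>A. c a * f a i)" using R by blast
    define c' where "c' s = (\<Sum>a\<in>{x. x \<in> A \<and> f x = s}. c a)" for s
    have "v = (\<lambda>i. \<Sum>s\<in>f ` A. c' s * s i)"
    proof
      fix i
      have "(\<Sum>s\<in>f ` A. c' s * s i) = (\<Sum>s\<in>f ` A. \<Sum>a\<in>{x. x \<in> A \<and> f x = s}. c a * f a i)"
        unfolding c'_def sum_distrib_right by (rule sum.cong) auto
      also have "\<dots> = (\<Sum>a\<in>A. c a * f a i)"
        using sum.image_gen[OF fA, of "\<lambda>a. c a * f a i" f] by simp
      finally show "v i = (\<Sum>s\<in>f ` A. c' s * s i)" using c by simp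
    qed
    then show "\<exists>c. v = (\<lambda>i. \<Sum>s\<in>f ` A. c s * s i)" by blast
  qed
qed

definition indepH :: "nat \<Rightarrow> (nat \<Rightarrow> nat \<Rightarrow> 'a::field) \<Rightarrow> nat set \<Rightarrow> bool" where
  "indepH r h B \<longleftrightarrow> (\<forall>x. (\<forall>i<r. (\<Sum>j\<in>B. h j i * x j) = 0) \<longrightarrow> (\<forall>j\<in>B. x j = 0))"

lemma gcol_fvec: "gcol k g j \<in> fvec k"
  unfolding gcol_def fvec_def by auto

lemma duality:
  fixes g h :: "nat \<Rightarrow> nat \<Rightarrow> 'a::field"
  assumes G: "is_generator_matrix k n g (code_of_pcm r n h)" and A: "A \<subseteq> {..<n}"
  shows "spans k (gcol k g ` A) \<longleftrightarrow> indepH r h ({..<n} - A)"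
proof -
  define B where "B = {..<n} - A"
  have fA: "finite A" using A finite_subset by blast
  have fB: "finite B" unfolding B_def by simp
  have BA: "A \<inter> B = {}" "A \<union> B = {..<n}" using A unfolding B_def by auto
  have g_in: "g i \<in> fvec n" "\<forall>i'<r. (\<Sum>j<n. h j i' * g i j) = 0" if "i < k" for i
    using G that unfolding is_generator_matrix_def code_of_pcm_def by auto
  have rows: "\<And>c. (\<forall>j. (\<Sum>i<k. c i * g i j) = 0) \<Longrightarrow> (\<forall>i<k. c i = 0)"
    using G unfolding is_generator_matrix_def by blast
  have spanC: "\<And>x. x \<in> code_of_pcm r n h \<Longrightarrow> \<exists>c. x = (\<lambda>j. \<Sum>i<k. c i * g i j)"
    using G unfolding is_generator_matrix_def by blast
  have gsum: "(\<Sum>i<k. c i * gcol k g j i) = (\<Sum>i<k. c i * g i j)" for c j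
    unfolding gcol_def by (rule sum.cong) auto
  show ?thesis unfolding B_def[symmetric]
  proof
    assume sp: "spans k (gcol k g ` A)"
    then have sp': "\<forall>v\<in>fvec k. \<exists>c. v = (\<lambda>i. \<Sum>a\<in>A. c a * gcol k g a i)"
      using spans_iff[OF fA] by blast
    show "indepH r h B" unfolding indepH_def
    proof (intro allI impI)
      fix x assume rel: "\<forall>i<r. (\<Sum>j\<in>B. h j i * x j) = 0"
      define x' where "x' j = (if j \<in> B then x j else 0)" for j
      have "x' \<in> code_of_pcm r n h" unfolding code_of_pcm_def
      proof (intro CollectI conjI allI impI)
        show "x' \<in> fvec n" unfolding fvec_def x'_def B_def by auto
        fix i assume "i < r"
        have "(\<Sum>j<n. h j i * x' j) = (\<Sum>j<n. if j \<in> B then h j i * x j else 0)"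
          unfolding x'_def by (rule sum.cong) auto
        also have "\<dots> = (\<Sum>j\<in>{..<n} \<inter> B. h j i * x j)" by (simp add: sum.inter_restrict)
        also have "{..<n} \<inter> B = B" unfolding B_def by auto
        finally show "(\<Sum>j<n. h j i * x' j) = 0" using rel \<open>i < r\<close> by simp
      qed
      then obtain c where xc: "x' = (\<lambda>j. \<Sum>i<k. c i * g i j)" using spanC by blast
      have c0: "c m = 0" if "m < k" for m
      proof -
        define e where "e i = (if i = m then (1::'a) else 0)" for i
        have "e \<in> fvec k" unfolding e_def fvec_def using that by auto
        then obtain a where ea: "e = (\<lambda>i. \<Sum>j\<in>A. a j * gcol k g j i)" using sp' by blast
        have "c m = (\<Sum>i<k. c i * e i)" unfolding e_def using that
          by (simp add: if_distrib sum.delta cong: if_cong)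
        also have "\<dots> = (\<Sum>i<k. \<Sum>j\<in>A. c i * (a j * gcol k g j i))"
          unfolding ea by (simp add: sum_distrib_left)
        also have "\<dots> = (\<Sum>j\<in>A. a j * (\<Sum>i<k. c i * gcol k g j i))"
          by (subst sum.swap) (simp add: sum_distrib_left algebra_simps)
        also have "\<dots> = (\<Sum>j\<in>A. a j * x' j)"
          unfolding gsum xc by simp
        also have "\<dots> = 0"
          using BA by (intro sum.neutral) (auto simp: x'_def)
        finally show ?thesis .
      qed
      show "\<forall>j\<in>B. x j = 0"
      proof
        fix j assume "j \<in> B"
        have "x j = x' j" using \<open>j \<in> B\<close> by (simp add: x'_def)
        also have "\<dots> = 0" unfolding xc using c0 by (simp add: sum.neutral)
        finally show "x j = 0" .
      qed
    qed
  next
    assume ind: "indepH r h B"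
    show "spans k (gcol k g ` A)"
    proof (rule ccontr)
      assume nsp: "\<not> spans k (gcol k g ` A)"
      have gf: "\<forall>s\<in>A. gcol k g s \<in> fvec k" using gcol_fvec by blast
      have "\<not> (\<forall>v\<in>fvec k. \<exists>c. v = (\<lambda>i. \<Sum>a\<in>A. c a * gcol k g a i))"
        using nsp spans_iff[OF fA, of k "gcol k g"] by simp
      then have "\<exists>c. (\<exists>i<k. c i \<noteq> 0) \<and> (\<forall>s\<in>A. (\<Sum>i<k. c i * gcol k g s i) = 0)"
        using annihilator[OF fA gf] by blast
      then obtain c where c1: "\<exists>i<k. c i \<noteq> 0" and c2: "\<forall>j\<in>A. (\<Sum>i<k. c i * gcol k g j i) = 0"
        by blast
      define x where "x j = (\<Sum>i<k. c i * g i j)" for j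
      have xA: "x j = 0" if "j \<in> A" for j using c2 that unfolding x_def gsum by blast
      have Hx: "(\<Sum>j<n. h j i' * x j) = 0" if "i' < r" for i'
      proof -
        have "(\<Sum>j<n. h j i' * x j) = (\<Sum>j<n. \<Sum>l<k. c l * (h j i' * g l j))"
          unfolding x_def by (simp add: sum_distrib_left algebra_simps)
        also have "\<dots> = (\<Sum>l<k. \<Sum>j<n. c l * (h j i' * g l j))"
          by (rule sum.swap)
        also have "\<dots> = (\<Sum>l<k. c l * (\<Sum>j<n. h j i' * g l j))"
          by (simp add: sum_distrib_left)
        also have "\<dots> = 0" using g_in(2) that by (intro sum.neutral) auto
        finally show ?thesis .
      qed
      have xB: "x j = 0" if "j \<in> B" for j
      proof -
        have "\<forall>i'<r. (\<Sum>j\<in>B. h j i' * x j) = 0"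
        proof (intro allI impI)
          fix i' assume "i' < r"
          have "(\<Sum>j<n. h j i' * x j) = (\<Sum>j\<in>A. h j i' * x j) + (\<Sum>j\<in>B. h j i' * x j)"
            using sum.union_disjoint[OF fA fB BA(1), of "\<lambda>j. h j i' * x j"] BA(2) by simp
          moreover have "(\<Sum>j\<in>A. h j i' * x j) = 0" using xA by simp
          ultimately show "(\<Sum>j\<in>B. h j i' * x j) = 0" using Hx[OF \<open>i' < r\<close>] by simp
        qed
        then show ?thesis using ind that unfolding indepH_def by blast
      qed
      have "x j = 0" for j
      proof (cases "j < n")
        case True
        then have "j \<in> A \<or> j \<in> B" using BA by auto
        then show ?thesis using xA xB by blast
      next
        case False
        have "g i j = 0" if "i < k" for i using g_in(1)[OF that] False unfolding fvec_def by simp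
        then show ?thesis unfolding x_def by (simp add: sum.neutral)
      qed
      then have "\<forall>i<k. c i = 0" using rows unfolding x_def by blast
      then show False using c1 by blast
    qed
  qed
qed



lemma fvec_bij: "bij_betw (\<lambda>v. restrict v {..<r}) (fvec r :: (nat \<Rightarrow> 'a::zero) set) ({..<r} \<rightarrow>\<^sub>E (UNIV :: 'a set))"
proof (rule bij_betwI[where g = "\<lambda>e i. if i < r then e i else 0"])
  show "(\<lambda>v. restrict v {..<r}) \<in> fvec r \<rightarrow> {..<r} \<rightarrow>\<^sub>E UNIV" by auto
  show "(\<lambda>e i. if i < r then e i else 0) \<in> ({..<r} \<rightarrow>\<^sub>E (UNIV :: 'a set)) \<rightarrow> fvec r"
    by (auto simp: fvec_def)
  show "(\<lambda>i. if i < r then restrict v {..<r} i else 0) = v" if "v \<in> fvec r" for v :: "nat \<Rightarrow> 'a"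
    using that by (auto simp: fvec_def)
  show "restrict (\<lambda>i. if i < r then e i else 0) {..<r} = e" if "e \<in> {..<r} \<rightarrow>\<^sub>E (UNIV :: 'a set)" for e
    using that by (auto simp: PiE_iff extensional_def restrict_def)
qed

lemma fvec_finite: "finite (fvec r :: (nat \<Rightarrow> 'a::{zero,finite}) set)"
proof -
  have "finite ({..<r} \<rightarrow>\<^sub>E (UNIV::'a set))" by (rule finite_PiE) auto
  then show ?thesis using bij_betw_finite[OF fvec_bij[of r, where 'a='a]] by simp
qed

lemma fvec_card: "card (fvec r :: (nat \<Rightarrow> 'a::{zero,finite}) set) = CARD('a) ^ r"
  using bij_betw_same_card[OF fvec_bij] by (simp add: card_PiE)

definition lcomb :: "(nat \<Rightarrow> 'a::field) list \<Rightarrow> (nat \<Rightarrow> 'a) \<Rightarrow> nat \<Rightarrow> 'a" where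
  "lcomb vs c = (\<lambda>i. \<Sum>m<length vs. c m * (vs ! m) i)"

definition lindep :: "(nat \<Rightarrow> 'a::field) list \<Rightarrow> bool" where
  "lindep vs \<longleftrightarrow> (\<forall>c. lcomb vs c = (\<lambda>_. 0) \<longrightarrow> (\<forall>m<length vs. c m = 0))"

definition lspan :: "(nat \<Rightarrow> 'a::field) list \<Rightarrow> (nat \<Rightarrow> 'a) set" where
  "lspan vs = range (lcomb vs)"

lemma lcomb_restrict: "lcomb vs (restrict c {..<length vs}) = lcomb vs c"
  unfolding lcomb_def by (intro ext sum.cong) auto

lemma lspan_eq: "lspan vs = lcomb vs ` ({..<length vs} \<rightarrow>\<^sub>E UNIV)"
proof (rule equalityI)
  show "lspan vs \<subseteq> lcomb vs ` ({..<length vs} \<rightarrow>\<^sub>E UNIV)"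
  proof
    fix v assume "v \<in> lspan vs"
    then obtain c where "v = lcomb vs c" unfolding lspan_def by blast
    then have "v = lcomb vs (restrict c {..<length vs})" by (simp add: lcomb_restrict)
    moreover have "restrict c {..<length vs} \<in> {..<length vs} \<rightarrow>\<^sub>E UNIV" by simp
    ultimately show "v \<in> lcomb vs ` ({..<length vs} \<rightarrow>\<^sub>E UNIV)" by blast
  qed
  show "lcomb vs ` ({..<length vs} \<rightarrow>\<^sub>E UNIV) \<subseteq> lspan vs" unfolding lspan_def by blast
qed

lemma card_lspan:
  assumes "lindep (vs :: (nat \<Rightarrow> 'a::{field,finite}) list)"
  shows "card (lspan vs) = CARD('a) ^ length vs"
proof -
  have "inj_on (lcomb vs) ({..<length vs} \<rightarrow>\<^sub>E UNIV)"
  proof (rule inj_onI)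
    fix c d :: "nat \<Rightarrow> 'a"
    assume c: "c \<in> {..<length vs} \<rightarrow>\<^sub>E UNIV" and d: "d \<in> {..<length vs} \<rightarrow>\<^sub>E UNIV"
      and eq: "lcomb vs c = lcomb vs d"
    have "lcomb vs (\<lambda>m. c m - d m) = (\<lambda>_. 0)"
    proof
      fix i
      have "lcomb vs (\<lambda>m. c m - d m) i = lcomb vs c i - lcomb vs d i"
        unfolding lcomb_def by (simp add: left_diff_distrib sum_subtractf)
      then show "lcomb vs (\<lambda>m. c m - d m) i = 0" using eq by simp
    qed
    then have "\<forall>m<length vs. c m - d m = 0" using assms unfolding lindep_def by blast
    show "c = d"
    proof
      fix x show "c x = d x"
      proof (cases "x < length vs")
        case True then show ?thesis using \<open>\<forall>m<length vs. c m - d m = 0\<close> by simp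
      next
        case False then show ?thesis using PiE_arb[OF c] PiE_arb[OF d] by simp
      qed
    qed
  qed
  then show ?thesis unfolding lspan_eq by (simp add: card_image card_PiE)
qed

lemma lspan_sub: "set vs \<subseteq> fvec r \<Longrightarrow> lspan vs \<subseteq> fvec r"
  unfolding lspan_def lcomb_def fvec_def by (auto intro!: sum.neutral dest!: nth_mem)

lemma lcomb_snoc: "lcomb (vs @ [v]) c = (\<lambda>i. lcomb vs c i + c (length vs) * v i)"
  unfolding lcomb_def by (auto simp: nth_append intro!: sum.cong)

lemma lindep_snoc: "lindep (vs @ [v]) \<longleftrightarrow> lindep vs \<and> v \<notin> lspan vs"
proof
  assume L: "lindep (vs @ [v])"
  have "lindep vs" unfolding lindep_def
  proof (rule allI, rule impI)
    fix c assume c: "lcomb vs c = (\<lambda>_. 0)"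
    define c' where "c' = c(length vs := 0)"
    have "lcomb vs c' = lcomb vs c" unfolding lcomb_def c'_def by (intro ext sum.cong) auto
    then have "lcomb (vs @ [v]) c' = (\<lambda>_. 0)" using c unfolding lcomb_snoc by (simp add: c'_def)
    then have "\<forall>m<length vs. c' m = 0" using L unfolding lindep_def by auto
    then show "\<forall>m<length vs. c m = 0" unfolding c'_def by auto
  qed
  moreover have "v \<notin> lspan vs"
  proof
    assume "v \<in> lspan vs"
    then obtain c where c: "v = lcomb vs c" unfolding lspan_def by blast
    define c' where "c' = c(length vs := -1)"
    have "lcomb vs c' = lcomb vs c" unfolding lcomb_def c'_def by (intro ext sum.cong) auto
    then have "lcomb (vs @ [v]) c' = (\<lambda>_. 0)" unfolding lcomb_snoc c by (simp add: c'_def)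
    then have "c' (length vs) = 0" using L unfolding lindep_def by auto
    then show False unfolding c'_def by simp
  qed
  ultimately show "lindep vs \<and> v \<notin> lspan vs" by blast
next
  assume R: "lindep vs \<and> v \<notin> lspan vs"
  show "lindep (vs @ [v])" unfolding lindep_def
  proof (rule allI, rule impI)
    fix c assume c: "lcomb (vs @ [v]) c = (\<lambda>_. 0)"
    have cl: "c (length vs) = 0"
    proof (rule ccontr)
      assume nz: "c (length vs) \<noteq> 0"
      have "v = lcomb vs (\<lambda>m. - c m / c (length vs))"
      proof
        fix i
        have "lcomb vs c i + c (length vs) * v i = 0" using fun_cong[OF c, of i] unfolding lcomb_snoc by simp
        then have "c (length vs) * v i = - lcomb vs c i" by (simp add: eq_neg_iff_add_eq_0 add.commute)
        then have "v i = - lcomb vs c i / c (length vs)" using nz by (simp add: field_simps)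
        also have "\<dots> = lcomb vs (\<lambda>m. - c m / c (length vs)) i"
          unfolding lcomb_def by (simp add: sum_divide_distrib sum_negf[symmetric])
        finally show "v i = lcomb vs (\<lambda>m. - c m / c (length vs)) i" .
      qed
      then show False using R unfolding lspan_def by blast
    qed
    then have "lcomb vs c = (\<lambda>_. 0)" using c unfolding lcomb_snoc by (metis add_0_right mult_zero_left)
    then have "\<forall>m<length vs. c m = 0" using R unfolding lindep_def by blast
    then show "\<forall>m<length (vs @ [v]). c m = 0" using cl by (auto simp: less_Suc_eq)
  qed
qed

definition Tset :: "nat \<Rightarrow> nat \<Rightarrow> (nat \<Rightarrow> 'a::field) list set" where
  "Tset r l = {vs. length vs = l \<and> set vs \<subseteq> fvec r \<and> lindep vs}"

lemma Tset_finite: "finite (Tset r l :: (nat \<Rightarrow> 'a::{field,finite}) list set)"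
proof (rule finite_subset)
  show "Tset r l \<subseteq> {vs. set vs \<subseteq> fvec r \<and> length vs = l}" unfolding Tset_def by auto
  show "finite {vs. set vs \<subseteq> (fvec r :: (nat \<Rightarrow> 'a) set) \<and> length vs = l}"
    by (rule finite_lists_length_eq[OF fvec_finite])
qed

lemma card_Tset: "card (Tset r l :: (nat \<Rightarrow> 'a::{field,finite}) list set) = (\<Prod>i<l. CARD('a) ^ r - CARD('a) ^ i)"
proof (induction l)
  case 0
  have "Tset r 0 = {[] :: (nat \<Rightarrow> 'a) list}" unfolding Tset_def lindep_def by auto
  then show ?case by simp
next
  case (Suc l)
  let ?f = "\<lambda>(vs, v :: nat \<Rightarrow> 'a). vs @ [v]"
  let ?Sig = "Sigma (Tset r l :: (nat \<Rightarrow> 'a) list set) (\<lambda>vs. fvec r - lspan vs)"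
  have eq: "Tset r (Suc l) = ?f ` ?Sig"
  proof
    show "Tset r (Suc l) \<subseteq> ?f ` ?Sig"
    proof
      fix ws :: "(nat \<Rightarrow> 'a) list" assume ws: "ws \<in> Tset r (Suc l)"
      then have "length ws = Suc l" unfolding Tset_def by simp
      then have "\<exists>y ys. ws = ys @ [y] \<and> length ys = l" by (simp add: length_Suc_conv_rev)
      then obtain vs v where wsv: "ws = vs @ [v]" "length vs = l" by blast
      then have "(vs, v) \<in> ?Sig" using ws lindep_snoc[of vs v] unfolding Tset_def by auto
      then show "ws \<in> ?f ` ?Sig" using wsv by force
    qed
    show "?f ` ?Sig \<subseteq> Tset r (Suc l)"
    proof
      fix ws assume "ws \<in> ?f ` ?Sig"
      then obtain p where p: "p \<in> ?Sig" "ws = ?f p" by blast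
      obtain vs v where pv: "p = (vs, v)" by (cases p)
      have ws: "ws = vs @ [v]" and vs: "vs \<in> Tset r l" and v: "v \<in> fvec r" "v \<notin> lspan vs"
        using p unfolding pv by auto
      have "lindep (vs @ [v])" using vs v lindep_snoc[of vs v] unfolding Tset_def by blast
      then show "ws \<in> Tset r (Suc l)" using ws vs v unfolding Tset_def by simp
    qed
  qed
  have inj: "inj_on ?f ?Sig"
  proof (rule inj_onI)
    fix p1 p2 assume "p1 \<in> ?Sig" "p2 \<in> ?Sig" and e: "?f p1 = ?f p2"
    obtain a1 b1 where 1: "p1 = (a1, b1)" by (cases p1)
    obtain a2 b2 where 2: "p2 = (a2, b2)" by (cases p2)
    from e have "a1 @ [b1] = a2 @ [b2]" unfolding 1 2 by simp
    then show "p1 = p2" unfolding 1 2 by simp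
  qed
  have "card (Tset r (Suc l) :: (nat \<Rightarrow> 'a) list set) = card ?Sig" unfolding eq using inj by (simp add: card_image)
  also have "\<dots> = (\<Sum>vs\<in>(Tset r l :: (nat \<Rightarrow> 'a) list set). card (fvec r - lspan vs))"
  proof (rule card_SigmaI)
    show "finite (Tset r l :: (nat \<Rightarrow> 'a) list set)" by (rule Tset_finite)
    show "\<forall>vs\<in>(Tset r l :: (nat \<Rightarrow> 'a) list set). finite (fvec r - lspan vs)"
      by (simp add: fvec_finite)
  qed
  also have "\<dots> = (\<Sum>vs\<in>(Tset r l :: (nat \<Rightarrow> 'a) list set). CARD('a) ^ r - CARD('a) ^ l)"
  proof (rule sum.cong[OF refl])
    fix vs :: "(nat \<Rightarrow> 'a) list" assume "vs \<in> Tset r l"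
    then have "lspan vs \<subseteq> fvec r" "card (lspan vs) = CARD('a) ^ l"
      using lspan_sub card_lspan unfolding Tset_def by auto
    moreover have "finite (lspan vs)" by (rule finite_subset[OF calculation(1) fvec_finite])
    ultimately show "card (fvec r - lspan vs) = CARD('a) ^ r - CARD('a) ^ l"
      using card_Diff_subset[of "lspan vs" "fvec r"] fvec_card[of r, where 'a='a] by simp
  qed
  also have "\<dots> = card (Tset r l :: (nat \<Rightarrow> 'a) list set) * (CARD('a) ^ r - CARD('a) ^ l)" by simp
  finally show ?case using Suc.IH by simp
qed



lemma sum_set_distinct:
  assumes "distinct js"
  shows "(\<Sum>j\<in>set js. F j) = (\<Sum>m<length js. F (js ! m))"
proof -
  have s: "set js = (!) js ` {..<length js}" by (auto simp: set_conv_nth)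
  have "inj_on ((!) js) {..<length js}" using inj_on_nth[OF assms] by simp
  then show ?thesis unfolding s by (simp add: sum.reindex)
qed

lemma indepH_list:
  fixes h :: "nat \<Rightarrow> nat \<Rightarrow> 'a::field"
  assumes d: "distinct js"
  shows "indepH r h (set js) \<longleftrightarrow>
    (\<forall>a. (\<forall>i<r. (\<Sum>m<length js. h (js ! m) i * a m) = 0) \<longrightarrow> (\<forall>m<length js. a m = 0))"
proof
  assume ind: "indepH r h (set js)"
  show "\<forall>a. (\<forall>i<r. (\<Sum>m<length js. h (js ! m) i * a m) = 0) \<longrightarrow> (\<forall>m<length js. a m = 0)"
  proof (rule allI, rule impI)
    fix a assume rel: "\<forall>i<r. (\<Sum>m<length js. h (js ! m) i * a m) = 0"
    have inj: "inj_on ((!) js) {..<length js}" using inj_on_nth[OF d] by simp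
    define x where "x j = a (the_inv_into {..<length js} ((!) js) j)" for j
    have xm: "x (js ! m) = a m" if "m < length js" for m
      unfolding x_def using the_inv_into_f_f[OF inj] that by simp
    have "\<forall>i<r. (\<Sum>j\<in>set js. h j i * x j) = 0"
    proof (intro allI impI)
      fix i assume "i < r"
      have "(\<Sum>j\<in>set js. h j i * x j) = (\<Sum>m<length js. h (js ! m) i * x (js ! m))"
        by (rule sum_set_distinct[OF d])
      also have "\<dots> = (\<Sum>m<length js. h (js ! m) i * a m)"
        by (rule sum.cong) (auto simp: xm)
      finally show "(\<Sum>j\<in>set js. h j i * x j) = 0" using rel \<open>i < r\<close> by simp
    qed
    then have "\<forall>j\<in>set js. x j = 0" using ind unfolding indepH_def by blast
    then show "\<forall>m<length js. a m = 0" using xm by (metis nth_mem)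
  qed
next
  assume R: "\<forall>a. (\<forall>i<r. (\<Sum>m<length js. h (js ! m) i * a m) = 0) \<longrightarrow> (\<forall>m<length js. a m = 0)"
  show "indepH r h (set js)" unfolding indepH_def
  proof (rule allI, rule impI)
    fix x assume rel: "\<forall>i<r. (\<Sum>j\<in>set js. h j i * x j) = 0"
    have "\<forall>i<r. (\<Sum>m<length js. h (js ! m) i * x (js ! m)) = 0"
      using rel sum_set_distinct[OF d, of "\<lambda>j. h j _ * x j"] by simp
    then have "\<forall>m<length js. x (js ! m) = 0" using R[rule_format, of "\<lambda>m. x (js ! m)"] by blast
    then show "\<forall>j\<in>set js. x j = 0" by (metis in_set_conv_nth)
  qed
qed

definition phi :: "(nat \<Rightarrow> nat \<Rightarrow> 'a::field) \<Rightarrow> nat list \<Rightarrow> 'a list \<Rightarrow> (nat \<Rightarrow> 'a) list" where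
  "phi h js cs = map (\<lambda>m. (\<lambda>i. cs ! m * h (js ! m) i)) [0..<length js]"

lemma phi_length: "length (phi h js cs) = length js"
  unfolding phi_def by simp

lemma phi_nth: "m < length js \<Longrightarrow> phi h js cs ! m = (\<lambda>i. cs ! m * h (js ! m) i)"
  unfolding phi_def by simp

definition JS :: "nat \<Rightarrow> nat \<Rightarrow> (nat \<Rightarrow> nat \<Rightarrow> 'a::field) \<Rightarrow> nat \<Rightarrow> nat list set" where
  "JS n r h l = {js. length js = l \<and> distinct js \<and> set js \<subseteq> {..<n} \<and> indepH r h (set js)}"

definition CS :: "nat \<Rightarrow> 'a::field list set" where
  "CS l = {cs. set cs \<subseteq> UNIV - {0} \<and> length cs = l}"

lemma phi_in:
  fixes h :: "nat \<Rightarrow> nat \<Rightarrow> 'a::field"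
  assumes H: "hamming_pcm r n h" and js: "js \<in> JS n r h l" and cs: "cs \<in> CS l"
  shows "phi h js cs \<in> Tset r l"
proof -
  have l: "length js = l" "length cs = l" "distinct js" "set js \<subseteq> {..<n}" "indepH r h (set js)"
    using js cs unfolding JS_def CS_def by simp_all
  have csnz: "cs ! m \<noteq> 0" if "m < l" for m
  proof -
    have "cs ! m \<in> set cs" using nth_mem[of m cs] l(2) that by simp
    then show ?thesis using cs unfolding CS_def by blast
  qed
  have hf: "h j \<in> fvec r" if "j < n" for j using H that unfolding hamming_pcm_def by blast
  have jsn: "js ! m < n" if "m < l" for m
  proof -
    have "js ! m \<in> set js" using nth_mem[of m js] l(1) that by simp
    then show ?thesis using l(4) by blast
  qed
  have "set (phi h js cs) \<subseteq> fvec r"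
  proof
    fix v assume "v \<in> set (phi h js cs)"
    then obtain m where m: "m < l" "v = phi h js cs ! m" using l by (auto simp: in_set_conv_nth phi_length)
    then have "v = (\<lambda>i. cs ! m * h (js ! m) i)" using l by (simp add: phi_nth)
    then show "v \<in> fvec r" using hf[OF jsn[OF m(1)]] unfolding fvec_def by simp
  qed
  moreover have "lindep (phi h js cs)" unfolding lindep_def
  proof (rule allI, rule impI)
    fix a assume a: "lcomb (phi h js cs) a = (\<lambda>_. 0)"
    have rel: "\<forall>i<r. (\<Sum>m<length js. h (js ! m) i * (a m * cs ! m)) = 0"
    proof (intro allI impI)
      fix i
      have "(\<Sum>m<length js. h (js ! m) i * (a m * cs ! m)) = lcomb (phi h js cs) a i"
        unfolding lcomb_def phi_length by (rule sum.cong) (auto simp: phi_nth algebra_simps)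
      then show "(\<Sum>m<length js. h (js ! m) i * (a m * cs ! m)) = 0" using a by simp
    qed
    have all: "\<forall>a. (\<forall>i<r. (\<Sum>m<length js. h (js ! m) i * a m) = 0) \<longrightarrow> (\<forall>m<length js. a m = 0)"
      using indepH_list[OF l(3), of r h] l(5) by simp
    have "\<forall>m<length js. a m * cs ! m = 0"
      using spec[OF all, of "\<lambda>m. a m * cs ! m"] rel by simp
    then show "\<forall>m<length (phi h js cs). a m = 0" using csnz l by (simp add: phi_length)
  qed
  ultimately show ?thesis unfolding Tset_def using l by (simp add: phi_length)
qed



lemma hf_nz:
  fixes h :: "nat \<Rightarrow> nat \<Rightarrow> 'a::field"
  assumes H: "hamming_pcm r n h" and "j < n"
  shows "h j \<in> fvec r" "\<exists>i. h j i \<noteq> 0"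
proof -
  have "h j \<in> fvec r \<and> h j \<noteq> (\<lambda>_. 0)" using H assms(2) unfolding hamming_pcm_def by blast
  then show "h j \<in> fvec r" "\<exists>i. h j i \<noteq> 0" by auto
qed

lemma nth_in_sub: "m < length xs \<Longrightarrow> set xs \<subseteq> A \<Longrightarrow> xs ! m \<in> A"
  using nth_mem by blast

lemma phi_inj:
  fixes h :: "nat \<Rightarrow> nat \<Rightarrow> 'a::field"
  assumes H: "hamming_pcm r n h"
  shows "inj_on (\<lambda>(js, cs). phi h js cs) (JS n r h l \<times> CS l)"
proof (rule inj_onI)
  fix p1 p2 assume p1: "p1 \<in> JS n r h l \<times> CS l" and p2: "p2 \<in> JS n r h l \<times> CS l"
    and e: "(\<lambda>(js, cs). phi h js cs) p1 = (\<lambda>(js, cs). phi h js cs) p2"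
  obtain js cs where 1: "p1 = (js, cs)" by (cases p1)
  obtain js' cs' where 2: "p2 = (js', cs')" by (cases p2)
  have l: "length js = l" "length cs = l" "set js \<subseteq> {..<n}" "set cs \<subseteq> UNIV - {0}"
    using p1 unfolding 1 JS_def CS_def by simp_all
  have l': "length js' = l" "length cs' = l" "set js' \<subseteq> {..<n}" "set cs' \<subseteq> UNIV - {0}"
    using p2 unfolding 2 JS_def CS_def by simp_all
  have e': "phi h js cs = phi h js' cs'" using e unfolding 1 2 by simp
  have both: "js ! m = js' ! m \<and> cs ! m = cs' ! m" if m: "m < l" for m
  proof -
    have jn: "js ! m < n" using nth_in_sub[of m js "{..<n}"] l m by simp
    have jn': "js' ! m < n" using nth_in_sub[of m js' "{..<n}"] l' m by simp
    have cnz: "cs ! m \<noteq> 0" using nth_in_sub[of m cs "UNIV - {0}"] l m by simp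
    have cnz': "cs' ! m \<noteq> 0" using nth_in_sub[of m cs' "UNIV - {0}"] l' m by simp
    define v where "v = (\<lambda>i. cs ! m * h (js ! m) i)"
    have v': "v = (\<lambda>i. cs' ! m * h (js' ! m) i)"
      using arg_cong[OF e', of "\<lambda>xs. xs ! m"] l l' m unfolding v_def by (simp add: phi_nth)
    have vf: "v \<in> fvec r" using hf_nz(1)[OF H jn] unfolding v_def fvec_def by simp
    obtain i0 where i0: "h (js ! m) i0 \<noteq> 0" using hf_nz(2)[OF H jn] by blast
    have vnz: "v \<noteq> (\<lambda>_. 0)"
    proof
      assume "v = (\<lambda>_. 0)"
      then have "cs ! m * h (js ! m) i0 = 0" unfolding v_def by metis
      then show False using cnz i0 by simp
    qed
    have ex1: "\<exists>!j. j < n \<and> (\<exists>c. c \<noteq> 0 \<and> v = (\<lambda>i. c * h j i))"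
      using H vf vnz unfolding hamming_pcm_def by blast
    have P1: "js ! m < n \<and> (\<exists>c. c \<noteq> 0 \<and> v = (\<lambda>i. c * h (js ! m) i))"
      using jn cnz unfolding v_def by blast
    have P2: "js' ! m < n \<and> (\<exists>c. c \<noteq> 0 \<and> v = (\<lambda>i. c * h (js' ! m) i))"
      using jn' cnz' v' by blast
    have jj: "js ! m = js' ! m" using ex1 P1 P2 by (metis (no_types, lifting))
    have "cs ! m * h (js ! m) i0 = cs' ! m * h (js ! m) i0"
      using fun_cong[OF v', of i0] jj unfolding v_def by simp
    then have "cs ! m = cs' ! m" using i0 by simp
    then show ?thesis using jj by simp
  qed
  have "js = js'" by (rule nth_equalityI) (use l l' both in auto)
  moreover have "cs = cs'" by (rule nth_equalityI) (use l l' both in auto)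
  ultimately show "p1 = p2" unfolding 1 2 by simp
qed


lemma lindepD: "lindep vs \<Longrightarrow> lcomb vs c = (\<lambda>_. 0) \<Longrightarrow> m < length vs \<Longrightarrow> c m = 0"
  unfolding lindep_def by blast

lemma lcomb_delta:
  assumes "m < length vs"
  shows "lcomb vs (\<lambda>p. if p = m then 1 else 0) = vs ! m"
proof
  fix i
  have "lcomb vs (\<lambda>p. if p = m then 1 else 0) i = (\<Sum>p<length vs. if p = m then (vs ! m) i else 0)"
    unfolding lcomb_def by (rule sum.cong) auto
  also have "\<dots> = (vs ! m) i" using assms by (simp add: sum.delta)
  finally show "lcomb vs (\<lambda>p. if p = m then 1 else 0) i = (vs ! m) i" .
qed

lemma phi_surj:
  fixes h :: "nat \<Rightarrow> nat \<Rightarrow> 'a::field"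
  assumes H: "hamming_pcm r n h" and vs: "vs \<in> Tset r l"
  shows "vs \<in> (\<lambda>(js, cs). phi h js cs) ` (JS n r h l \<times> CS l)"
proof -
  have vl: "length vs = l" and vf: "set vs \<subseteq> fvec r" and vi: "lindep vs"
    using vs unfolding Tset_def by simp_all
  have vnz: "vs ! m \<noteq> (\<lambda>_. 0)" if "m < l" for m
  proof
    assume z: "vs ! m = (\<lambda>_. 0)"
    have "lcomb vs (\<lambda>p. if p = m then 1 else 0) = (\<lambda>_. 0)" using lcomb_delta[of m vs] that vl z by simp
    then have "(\<lambda>p. if p = m then (1::'a) else 0) m = 0" using lindepD[OF vi] that vl by blast
    then show False by simp
  qed
  have "\<forall>m. \<exists>p. m < l \<longrightarrow> fst p < n \<and> snd p \<noteq> 0 \<and> vs ! m = (\<lambda>i. snd p * h (fst p) i)"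
  proof
    fix m
    show "\<exists>p. m < l \<longrightarrow> fst p < n \<and> snd p \<noteq> 0 \<and> vs ! m = (\<lambda>i. snd p * h (fst p) i)"
    proof (cases "m < l")
      case True
      have "vs ! m \<in> fvec r" using nth_in_sub[of m vs "fvec r"] vl vf True by simp
      then have "\<exists>!j. j < n \<and> (\<exists>c. c \<noteq> 0 \<and> vs ! m = (\<lambda>i. c * h j i))"
        using H vnz[OF True] unfolding hamming_pcm_def by blast
      then obtain j c where "j < n" "c \<noteq> 0" "vs ! m = (\<lambda>i. c * h j i)" by blast
      then show ?thesis by (intro exI[of _ "(j, c)"]) simp
    qed simp
  qed
  then obtain P where P: "\<forall>m. m < l \<longrightarrow> fst (P m) < n \<and> snd (P m) \<noteq> 0 \<and> vs ! m = (\<lambda>i. snd (P m) * h (fst (P m)) i)"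
    using choice[of "\<lambda>m p. m < l \<longrightarrow> fst p < n \<and> snd p \<noteq> 0 \<and> vs ! m = (\<lambda>i. snd p * h (fst p) i)"] by blast
  define J where "J m = fst (P m)" for m
  define C where "C m = snd (P m)" for m
  have JC: "J m < n" "C m \<noteq> 0" "vs ! m = (\<lambda>i. C m * h (J m) i)" if "m < l" for m
    using P that unfolding J_def C_def by auto
  define js where "js = map J [0..<l]"
  define cs where "cs = map C [0..<l]"
  have jsl: "length js = l" and csl: "length cs = l" unfolding js_def cs_def by simp_all
  have jsn: "js ! m = J m" if "m < l" for m unfolding js_def using that by simp
  have csn: "cs ! m = C m" if "m < l" for m unfolding cs_def using that by simp
  have dist: "distinct js"
    unfolding distinct_conv_nth
  proof (intro allI impI)
    fix m1 m2 assume m1: "m1 < length js" and m2: "m2 < length js" and ne: "m1 \<noteq> m2"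
    show "js ! m1 \<noteq> js ! m2"
    proof
      assume eqj: "js ! m1 = js ! m2"
      define j where "j = J m1"
      have j2: "J m2 = j" using eqj m1 m2 jsl jsn unfolding j_def by simp
      define a where "a p = (if p = m1 then C m2 else if p = m2 then - C m1 else 0)" for p
      have "lcomb vs a = (\<lambda>_. 0)"
      proof
        fix i
        have "a p * (vs ! p) i = (if p = m1 then C m2 * (vs ! m1) i else 0) + (if p = m2 then - C m1 * (vs ! m2) i else 0)" for p
          unfolding a_def using ne by auto
        then have "lcomb vs a i = (\<Sum>p<length vs. if p = m1 then C m2 * (vs ! m1) i else 0)
            + (\<Sum>p<length vs. if p = m2 then - C m1 * (vs ! m2) i else 0)"
          unfolding lcomb_def by (simp add: sum.distrib)
        also have "\<dots> = C m2 * (vs ! m1) i - C m1 * (vs ! m2) i"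
          using m1 m2 jsl vl by (simp add: sum.delta)
        also have "\<dots> = 0" using JC(3)[of m1] JC(3)[of m2] m1 m2 jsl j2 unfolding j_def by simp
        finally show "lcomb vs a i = 0" .
      qed
      then have "a m1 = 0" using lindepD[OF vi] m1 jsl vl by simp
      then show False unfolding a_def using JC(2)[of m2] m2 jsl by simp
    qed
  qed
  have indep: "indepH r h (set js)"
  proof -
    have "\<forall>a. (\<forall>i<r. (\<Sum>m<length js. h (js ! m) i * a m) = 0) \<longrightarrow> (\<forall>m<length js. a m = 0)"
    proof (rule allI, rule impI)
      fix a assume rel: "\<forall>i<r. (\<Sum>m<length js. h (js ! m) i * a m) = 0"
      define b where "b m = a m / C m" for m
      have "lcomb vs b = (\<lambda>_. 0)"
      proof
        fix i
        have "lcomb vs b i = (\<Sum>m<length js. h (js ! m) i * a m)"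
          unfolding lcomb_def vl jsl
        proof (rule sum.cong[OF refl])
          fix m assume "m \<in> {..<l}"
          then have "m < l" by simp
          then show "b m * (vs ! m) i = h (js ! m) i * a m"
            using JC[OF \<open>m < l\<close>] jsn[OF \<open>m < l\<close>] unfolding b_def by simp
        qed
        also have "\<dots> = 0"
        proof (cases "i < r")
          case True then show ?thesis using rel by simp
        next
          case False
          have "h (js ! m) i = 0" if "m < length js" for m
            using hf_nz(1)[OF H JC(1)[of m]] that jsl jsn[of m] False unfolding fvec_def by simp
          then show ?thesis by simp
        qed
        finally show "lcomb vs b i = 0" .
      qed
      then have "\<forall>m<l. b m = 0" using lindepD[OF vi] vl by simp
      then show "\<forall>m<length js. a m = 0" using JC(2) jsl unfolding b_def by simp
    qed
    then show ?thesis by (simp only: indepH_list[OF dist, of r h])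
  qed
  have jsin: "js \<in> JS n r h l" unfolding JS_def
    using jsl dist indep JC(1) by (auto simp: js_def)
  have csin: "cs \<in> CS l" unfolding CS_def using csl JC(2) by (auto simp: cs_def)
  have "phi h js cs = vs"
    by (rule nth_equalityI) (use jsl vl in \<open>auto simp: phi_length phi_nth jsn csn JC(3)\<close>)
  then show ?thesis using jsin csin by force
qed


lemma card_CS: "card (CS l :: 'a::{field,finite} list set) = (CARD('a) - 1) ^ l"
proof -
  have "card (UNIV - {0::'a}) = CARD('a) - 1" by (simp add: card_Diff_singleton)
  moreover have "card (CS l :: 'a list set) = card (UNIV - {0::'a}) ^ l"
    unfolding CS_def by (rule card_lists_length_eq) simp
  ultimately show ?thesis by simp
qed

lemma card_JS:
  fixes h :: "nat \<Rightarrow> nat \<Rightarrow> 'a::field"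
  shows "card (JS n r h l) = card {B. B \<subseteq> {..<n} \<and> card B = l \<and> indepH r h B} * fact l"
proof -
  define IS where "IS = {B. B \<subseteq> {..<n} \<and> card B = l \<and> indepH r h B}"
  define L where "L B = {xs. length xs = l \<and> distinct xs \<and> set xs \<subseteq> B}" for B :: "nat set"
  have finIS: "finite IS" unfolding IS_def by (rule finite_subset[of _ "Pow {..<n}"]) auto
  have Bfin: "finite B" if "B \<in> IS" for B
    using that finite_subset[of B "{..<n}"] unfolding IS_def by simp
  have setxs: "set xs = B" if "B \<in> IS" "xs \<in> L B" for B xs
  proof -
    have "card (set xs) = l" using that unfolding L_def by (simp add: distinct_card)
    moreover have "card B = l" using that(1) unfolding IS_def by simp
    moreover have "set xs \<subseteq> B" using that(2) unfolding L_def by simp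
    ultimately show ?thesis using card_subset_eq[OF Bfin[OF that(1)]] by simp
  qed
  have eq: "JS n r h l = (\<Union>B\<in>IS. L B)"
  proof
    show "JS n r h l \<subseteq> (\<Union>B\<in>IS. L B)"
    proof
      fix js assume js: "js \<in> JS n r h l"
      then have "set js \<in> IS" unfolding JS_def IS_def by (simp add: distinct_card)
      moreover have "js \<in> L (set js)" using js unfolding JS_def L_def by simp
      ultimately show "js \<in> (\<Union>B\<in>IS. L B)" by blast
    qed
    show "(\<Union>B\<in>IS. L B) \<subseteq> JS n r h l"
    proof
      fix xs assume "xs \<in> (\<Union>B\<in>IS. L B)"
      then obtain B where B: "B \<in> IS" "xs \<in> L B" by blast
      then have "set xs = B" by (rule setxs)
      then show "xs \<in> JS n r h l" using B unfolding JS_def IS_def L_def by simp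
    qed
  qed
  have finL: "finite (L B)" if "B \<in> IS" for B
  proof (rule finite_subset)
    show "L B \<subseteq> {xs. set xs \<subseteq> B \<and> length xs = l}" unfolding L_def by blast
    show "finite {xs. set xs \<subseteq> B \<and> length xs = l}" by (rule finite_lists_length_eq[OF Bfin[OF that]])
  qed
  have cardL: "card (L B) = fact l" if "B \<in> IS" for B
  proof -
    have cB: "card B = l" using that unfolding IS_def by simp
    have "card (L B) = \<Prod>{card B - l + 1 .. card B}"
      unfolding L_def by (rule card_lists_distinct_length_eq[OF Bfin[OF that]]) (simp add: cB)
    also have "\<dots> = \<Prod>{1..l}" using cB by simp
    also have "\<dots> = fact l" by (simp add: fact_prod)
    finally show ?thesis .
  qed
  have "card (JS n r h l) = (\<Sum>B\<in>IS. card (L B))"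
    unfolding eq
  proof (rule card_UN_disjoint[OF finIS])
    show "\<forall>B\<in>IS. finite (L B)" using finL by blast
    show "\<forall>B\<in>IS. \<forall>B'\<in>IS. B \<noteq> B' \<longrightarrow> L B \<inter> L B' = {}"
    proof (intro ballI impI)
      fix B B' assume B: "B \<in> IS" and B': "B' \<in> IS" and ne: "B \<noteq> B'"
      show "L B \<inter> L B' = {}"
      proof (rule ccontr)
        assume "L B \<inter> L B' \<noteq> {}"
        then obtain xs where "xs \<in> L B" "xs \<in> L B'" by blast
        then have "set xs = B" "set xs = B'" using setxs B B' by auto
        then show False using ne by simp
      qed
    qed
  qed
  also have "\<dots> = card IS * fact l" using cardL by simp
  finally show ?thesis unfolding IS_def .
qed

lemma count_indep:
  fixes h :: "nat \<Rightarrow> nat \<Rightarrow> 'a::{field,finite}"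
  assumes H: "hamming_pcm r n h"
  shows "card {B. B \<subseteq> {..<n} \<and> card B = l \<and> indepH r h B} * fact l * (CARD('a) - 1) ^ l
           = (\<Prod>i<l. CARD('a) ^ r - CARD('a) ^ i)"
proof -
  have img: "(\<lambda>(js, cs). phi h js cs) ` (JS n r h l \<times> (CS l :: 'a list set)) = Tset r l"
  proof
    show "(\<lambda>(js, cs). phi h js cs) ` (JS n r h l \<times> (CS l :: 'a list set)) \<subseteq> Tset r l"
    proof
      fix v assume "v \<in> (\<lambda>(js, cs). phi h js cs) ` (JS n r h l \<times> (CS l :: 'a list set))"
      then obtain p where p: "p \<in> JS n r h l \<times> (CS l :: 'a list set)" "v = (\<lambda>(js, cs). phi h js cs) p" by blast
      obtain js cs where pj: "p = (js, cs)" by (cases p)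
      have "js \<in> JS n r h l" "cs \<in> (CS l :: 'a list set)" "v = phi h js cs" using p unfolding pj by simp_all
      then show "v \<in> Tset r l" using phi_in[OF H] by simp
    qed
    show "Tset r l \<subseteq> (\<lambda>(js, cs). phi h js cs) ` (JS n r h l \<times> (CS l :: 'a list set))"
      by (intro subsetI phi_surj[OF H])
  qed
  have "card (Tset r l :: (nat \<Rightarrow> 'a) list set) = card (JS n r h l \<times> (CS l :: 'a list set))"
    unfolding img[symmetric] using phi_inj[OF H, of l] by (rule card_image)
  also have "\<dots> = card (JS n r h l) * card (CS l :: 'a list set)" by (rule card_cartesian_product)
  finally show ?thesis using card_Tset[of r l, where 'a='a] card_JS[of n r h l] card_CS[of l, where 'a='a]
    by (simp add: mult.assoc)
qed



lemma card_field_ge2: "CARD('a::{finite,field}) \<ge> 2"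
proof -
  have "card {0::'a, 1} = 2" by simp
  moreover have "card {0::'a, 1} \<le> CARD('a)" by (rule card_mono) auto
  ultimately show ?thesis by simp
qed

lemma bernoulli_nat: "(q::nat) \<ge> 1 \<Longrightarrow> r * (q - 1) + 1 \<le> q ^ r"
proof (induction r)
  case 0 then show ?case by simp
next
  case (Suc r)
  have "Suc r * (q - 1) + 1 = (r * (q - 1) + 1) + (q - 1)" by simp
  also have "\<dots> \<le> q ^ r + (q - 1)" using Suc by simp
  also have "\<dots> \<le> q ^ r + (q - 1) * q ^ r"
  proof -
    have "1 \<le> q ^ r" using Suc.prems by simp
    then have "(q - 1) * 1 \<le> (q - 1) * q ^ r" by (rule mult_left_mono) simp
    then show ?thesis by simp
  qed
  also have "\<dots> = (1 + (q - 1)) * q ^ r" by (simp add: algebra_simps)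
  also have "\<dots> = q ^ Suc r" using Suc.prems by simp
  finally show ?case .
qed

lemma r_le_n: "(q::nat) \<ge> 2 \<Longrightarrow> r \<le> (q ^ r - 1) div (q - 1)"
proof -
  assume q: "q \<ge> 2"
  have "r * (q - 1) \<le> q ^ r - 1" using bernoulli_nat[of q r] q by simp
  then have "r * (q - 1) div (q - 1) \<le> (q ^ r - 1) div (q - 1)" by (rule div_le_mono)
  then show ?thesis using q by simp
qed

lemma indepH_empty: "indepH r h {}"
  unfolding indepH_def by simp

lemma indepH_mono:
  fixes h :: "nat \<Rightarrow> nat \<Rightarrow> 'a::field"
  assumes "B' \<subseteq> B" "finite B" "indepH r h B"
  shows "indepH r h B'"
  unfolding indepH_def
proof (rule allI, rule impI)
  fix x assume rel: "\<forall>i<r. (\<Sum>j\<in>B'. h j i * x j) = 0"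
  define x' where "x' j = (if j \<in> B' then x j else 0)" for j
  have "\<forall>i<r. (\<Sum>j\<in>B. h j i * x' j) = 0"
  proof (intro allI impI)
    fix i assume "i < r"
    have "(\<Sum>j\<in>B. h j i * x' j) = (\<Sum>j\<in>B. if j \<in> B' then h j i * x j else 0)"
      unfolding x'_def by (rule sum.cong) auto
    also have "\<dots> = (\<Sum>j\<in>B \<inter> B'. h j i * x j)" using assms(2) by (simp add: sum.inter_restrict)
    also have "B \<inter> B' = B'" using assms(1) by auto
    finally show "(\<Sum>j\<in>B. h j i * x' j) = 0" using rel \<open>i < r\<close> by simp
  qed
  then have "\<forall>j\<in>B. x' j = 0" using assms(3) unfolding indepH_def by blast
  show "\<forall>j\<in>B'. x j = 0"
  proof
    fix j assume j: "j \<in> B'"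
    then have "j \<in> B" using assms(1) by blast
    then have "x' j = 0" using \<open>\<forall>j\<in>B. x' j = 0\<close> by blast
    then show "x j = 0" using j unfolding x'_def by simp
  qed
qed

lemma sum_by_card:
  fixes f :: "nat \<Rightarrow> real"
  assumes fA: "finite A"
  shows "(\<Sum>B\<in>{B. B \<subseteq> A \<and> B \<noteq> {} \<and> Q B}. f (card B))
       = (\<Sum>l=1..card A. real (card {B. B \<subseteq> A \<and> card B = l \<and> Q B}) * f l)"
proof -
  define S where "S = {B. B \<subseteq> A \<and> B \<noteq> {} \<and> Q B}"
  have fS: "finite S" unfolding S_def by (rule finite_subset[of _ "Pow A"]) (use fA in auto)
  have img: "card ` S \<subseteq> {1..card A}"
  proof
    fix l assume "l \<in> card ` S"
    then obtain B where B: "B \<in> S" "l = card B" by blast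
    then have "B \<subseteq> A" "B \<noteq> {}" unfolding S_def by auto
    moreover have "finite B" using \<open>B \<subseteq> A\<close> fA finite_subset by blast
    ultimately have "card B \<ge> 1" "card B \<le> card A" using card_mono[OF fA] card_0_eq by fastforce+
    then show "l \<in> {1..card A}" using B by simp
  qed
  have "(\<Sum>B\<in>S. f (card B)) = (\<Sum>l\<in>{1..card A}. \<Sum>B\<in>{x. x \<in> S \<and> card x = l}. f (card B))"
    by (rule sum.group[OF fS _ img, symmetric]) simp
  also have "\<dots> = (\<Sum>l=1..card A. real (card {B. B \<subseteq> A \<and> card B = l \<and> Q B}) * f l)"
  proof (rule sum.cong[OF refl])
    fix l assume l: "l \<in> {1..card A}"
    have e: "{x. x \<in> S \<and> card x = l} = {B. B \<subseteq> A \<and> card B = l \<and> Q B}"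
      unfolding S_def using l by auto
    have "(\<Sum>B\<in>{x. x \<in> S \<and> card x = l}. f (card B)) = (\<Sum>B\<in>{x. x \<in> S \<and> card x = l}. f l)"
      by (rule sum.cong) auto
    also have "\<dots> = real (card {x. x \<in> S \<and> card x = l}) * f l" by simp
    finally show "(\<Sum>B\<in>{x. x \<in> S \<and> card x = l}. f (card B)) = real (card {B. B \<subseteq> A \<and> card B = l \<and> Q B}) * f l"
      unfolding e .
  qed
  finally show ?thesis unfolding S_def .
qed

lemma wt_eq:
  assumes "1 \<le> l" "l \<le> n"
  shows "wt n (n - l) = 1 / real ((n - 1) choose (n - l))"
proof -
  have "n - 1 - (n - l) = l - 1" using assms by simp
  then have "real ((n - 1) choose (n - l)) = fact (n - 1) / (fact (n - l) * fact (l - 1))"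
    using binomial_fact[of "n - l" "n - 1", where 'a=real] assms by simp
  moreover have "wt n (n - l) = fact (n - l) * fact (l - 1) / fact (n - 1)"
    unfolding wt_def using \<open>n - 1 - (n - l) = l - 1\<close> by simp
  ultimately show ?thesis by simp
qed

lemma binom_wt:
  assumes "1 \<le> l" "l \<le> n"
  shows "real (n choose l) * wt n (n - l) = real n / real l"
proof -
  obtain a where a: "n = Suc a" using assms by (cases n) auto
  obtain b where b: "l = Suc b" using assms by (cases l) auto
  have C: "real (n choose l) = fact n / (fact l * fact (n - l))" using binomial_fact[OF assms(2), where 'a=real] by simp
  have W: "wt n (n - l) = fact (n - l) * fact b / fact a"
    unfolding wt_def using assms a b by simp
  have fn: "(fact n :: real) = real n * fact a" unfolding a by simp
  have fl: "(fact l :: real) = real l * fact b" unfolding b by simp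
  have aux: "\<And>N A L B D :: real. A \<noteq> 0 \<Longrightarrow> B \<noteq> 0 \<Longrightarrow> D \<noteq> 0 \<Longrightarrow> L \<noteq> 0 \<Longrightarrow>
      (N * A) / (L * B * D) * (D * B / A) = N / L"
    by (simp add: field_simps)
  have "real (n choose l) * wt n (n - l) = (real n * fact a) / (real l * fact b * fact (n - l)) * (fact (n - l) * fact b / fact a)"
    unfolding C W fn fl by simp
  also have "\<dots> = real n / real l" by (rule aux) (use assms in auto)
  finally show ?thesis .
qed


lemma IS_real:
  fixes h :: "nat \<Rightarrow> nat \<Rightarrow> 'a::{finite,field}"
  assumes H: "hamming_pcm r n h"
  shows "real (card {B. B \<subseteq> {..<n} \<and> card B = l \<and> indepH r h B})
         = 1 / fact l * (\<Prod>i<l. (real CARD('a) ^ r - real CARD('a) ^ i) / (real CARD('a) - 1))"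
proof -
  define q where "q = CARD('a)"
  define c where "c = card {B. B \<subseteq> {..<n} \<and> card B = l \<and> indepH r h B}"
  have q2: "q \<ge> 2" unfolding q_def by (rule card_field_ge2)
  have nat_eq: "c * fact l * (q - 1) ^ l = (\<Prod>i<l. q ^ r - q ^ i)"
    using count_indep[OF H, of l] unfolding c_def q_def .
  then have "real (c * fact l * (q - 1) ^ l) = real (\<Prod>i<l. q ^ r - q ^ i)" by simp
  then have re: "real c * fact l * (real q - 1) ^ l = (\<Prod>i<l. real (q ^ r - q ^ i))"
    using q2 by (simp add: of_nat_diff)
  have pe: "(\<Prod>i<l. real (q ^ r - q ^ i)) = (\<Prod>i<l. real q ^ r - real q ^ i)"
  proof (cases "l \<le> r")
    case True
    show ?thesis
    proof (rule prod.cong[OF refl])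
      fix i assume "i \<in> {..<l}"
      then have "i \<le> r" using True by simp
      then have "q ^ i \<le> q ^ r" using q2 by (simp add: power_increasing)
      then show "real (q ^ r - q ^ i) = real q ^ r - real q ^ i" by (simp add: of_nat_diff)
    qed
  next
    case False
    then have rl: "r \<in> {..<l}" by simp
    have "\<exists>a\<in>{..<l}. real (q ^ r - q ^ a) = 0" using rl by (intro bexI[of _ r]) simp_all
    then have "(\<Prod>i<l. real (q ^ r - q ^ i)) = 0" by (intro prod_zero) simp_all
    moreover have "\<exists>a\<in>{..<l}. real q ^ r - real q ^ a = 0" using rl by (intro bexI[of _ r]) simp_all
    then have "(\<Prod>i<l. real q ^ r - real q ^ i) = 0" by (intro prod_zero) simp_all
    ultimately show ?thesis by linarith
  qed
  have qpos: "real q - 1 > 0" using q2 by simp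
  have "(\<Prod>i<l. (real q ^ r - real q ^ i) / (real q - 1)) = (\<Prod>i<l. real q ^ r - real q ^ i) / (real q - 1) ^ l"
    by (simp add: prod_dividef)
  also have "\<dots> = real c * fact l" using re pe qpos by (simp add: field_simps)
  finally have "(\<Prod>i<l. (real q ^ r - real q ^ i) / (real q - 1)) = real c * fact l" .
  then show ?thesis unfolding c_def[symmetric] q_def[symmetric] by (simp add: field_simps)
qed

theorem mainTheorem6:
  fixes r n k :: nat and h :: "nat \<Rightarrow> nat \<Rightarrow> 'a::{finite,field}" and g :: "nat \<Rightarrow> nat \<Rightarrow> 'a"
  defines "q \<equiv> CARD('a)"
  assumes "r \<ge> 2" and "(q, r) \<noteq> (2, 2)"
    and "n = (q ^ r - 1) div (q - 1)"
    and "hamming_pcm r n h"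
    and "is_generator_matrix k n g (code_of_pcm r n h)"
  shows "(\<lambda>t. real t * stop_prob k n g t) sums
           (real n * harm n -
            (\<Sum>l=1..r. 1 / real ((n - 1) choose (n - l)) * (1 / fact l) *
               (\<Prod>i<l. (real q ^ r - real q ^ i) / (real q - 1))))"
proof -
  have H: "hamming_pcm r n h" by fact
  have G: "is_generator_matrix k n g (code_of_pcm r n h)" by fact
  have q2: "q \<ge> 2" unfolding q_def by (rule card_field_ge2)
  have rn: "r \<le> n" using r_le_n[OF q2, of r] \<open>n = (q ^ r - 1) div (q - 1)\<close> by simp
  have n1: "n \<ge> 1" using rn \<open>r \<ge> 2\<close> by simp
  define P where "P A = spans k (gcol k g ` A)" for A
  have dualP: "P A \<longleftrightarrow> indepH r h ({..<n} - A)" if "A \<subseteq> {..<n}" for A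
    unfolding P_def using duality[OF G that] .
  have mono: "P B" if "A \<subseteq> B" "B \<subseteq> {..<n}" "P A" for A B
  proof -
    have "indepH r h ({..<n} - A)" using dualP[of A] that by auto
    then have "indepH r h ({..<n} - B)" by (rule indepH_mono[rotated 2]) (use that in auto)
    then show ?thesis using dualP[OF that(2)] by simp
  qed
  have full: "P {..<n}" using dualP[of "{..<n}"] indepH_empty by simp
  have S: "(\<lambda>t. real t * (real (card {d \<in> {..<t} \<rightarrow>\<^sub>E {..<n}. P (d ` {..<t}) \<and> \<not> P (d ` {..<t - 1})})
            / real n ^ t)) sums (\<Sum>S\<in>{S. S \<subseteq> {..<n} \<and> \<not> P S}. wt n (card S))"
    by (rule prob_main[of n P, OF n1 mono full])
  have stop_eq: "stop_prob k n g t = real (card {d \<in> {..<t} \<rightarrow>\<^sub>E {..<n}. P (d ` {..<t}) \<and> \<not> P (d ` {..<t - 1})})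
            / real n ^ t" for t
    unfolding stop_prob_def P_def by (simp add: image_image)
  define W where "W B = wt n (n - card B)" for B :: "nat set"
  have V1: "(\<Sum>S\<in>{S. S \<subseteq> {..<n} \<and> \<not> P S}. wt n (card S)) = (\<Sum>B\<in>{B. B \<subseteq> {..<n} \<and> \<not> indepH r h B}. W B)"
  proof -
    let ?f = "\<lambda>B. {..<n} - B"
    have inj: "inj_on ?f {B. B \<subseteq> {..<n} \<and> \<not> indepH r h B}"
    proof (rule inj_onI)
      fix B1 B2 assume "B1 \<in> {B. B \<subseteq> {..<n} \<and> \<not> indepH r h B}" "B2 \<in> {B. B \<subseteq> {..<n} \<and> \<not> indepH r h B}"
        and "{..<n} - B1 = {..<n} - B2"
      then show "B1 = B2" by blast
    qed
    have img: "{S. S \<subseteq> {..<n} \<and> \<not> P S} = ?f ` {B. B \<subseteq> {..<n} \<and> \<not> indepH r h B}"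
    proof
      show "{S. S \<subseteq> {..<n} \<and> \<not> P S} \<subseteq> ?f ` {B. B \<subseteq> {..<n} \<and> \<not> indepH r h B}"
      proof
        fix S assume S: "S \<in> {S. S \<subseteq> {..<n} \<and> \<not> P S}"
        then have "{..<n} - S \<in> {B. B \<subseteq> {..<n} \<and> \<not> indepH r h B}" using dualP by auto
        moreover have "S = ?f ({..<n} - S)" using S by auto
        ultimately show "S \<in> ?f ` {B. B \<subseteq> {..<n} \<and> \<not> indepH r h B}" by blast
      qed
      show "?f ` {B. B \<subseteq> {..<n} \<and> \<not> indepH r h B} \<subseteq> {S. S \<subseteq> {..<n} \<and> \<not> P S}"
      proof
        fix S assume "S \<in> ?f ` {B. B \<subseteq> {..<n} \<and> \<not> indepH r h B}"
        then obtain B where B: "B \<subseteq> {..<n}" "\<not> indepH r h B" "S = {..<n} - B" by blast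
        have "{..<n} - S = B" using B by auto
        then show "S \<in> {S. S \<subseteq> {..<n} \<and> \<not> P S}" using B dualP[of S] by auto
      qed
    qed
    have "(\<Sum>S\<in>{S. S \<subseteq> {..<n} \<and> \<not> P S}. wt n (card S))
        = (\<Sum>B\<in>{B. B \<subseteq> {..<n} \<and> \<not> indepH r h B}. wt n (card ({..<n} - B)))"
      unfolding img using inj by (simp add: sum.reindex)
    also have "\<dots> = (\<Sum>B\<in>{B. B \<subseteq> {..<n} \<and> \<not> indepH r h B}. W B)"
    proof (rule sum.cong[OF refl])
      fix B assume "B \<in> {B. B \<subseteq> {..<n} \<and> \<not> indepH r h B}"
      then have B: "B \<subseteq> {..<n}" by simp
      have fB: "finite B" using finite_subset[OF B] by simp
      have "card ({..<n} - B) = n - card B" using card_Diff_subset[OF fB B] by simp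
      then show "wt n (card ({..<n} - B)) = W B" unfolding W_def by simp
    qed
    finally show ?thesis .
  qed
  have finPow: "finite {B. B \<subseteq> {..<n} \<and> Q B}" for Q :: "nat set \<Rightarrow> bool"
    by (rule finite_subset[of _ "Pow {..<n}"]) auto
  have V2: "(\<Sum>B\<in>{B. B \<subseteq> {..<n} \<and> \<not> indepH r h B}. W B)
      = (\<Sum>B\<in>{B. B \<subseteq> {..<n} \<and> B \<noteq> {} \<and> True}. W B) - (\<Sum>B\<in>{B. B \<subseteq> {..<n} \<and> B \<noteq> {} \<and> indepH r h B}. W B)"
  proof -
    have "{B. B \<subseteq> {..<n} \<and> \<not> indepH r h B} = {B. B \<subseteq> {..<n} \<and> B \<noteq> {} \<and> True} - {B. B \<subseteq> {..<n} \<and> B \<noteq> {} \<and> indepH r h B}"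
      using indepH_empty[of r h] by auto
    moreover have "{B. B \<subseteq> {..<n} \<and> B \<noteq> {} \<and> indepH r h B} \<subseteq> {B. B \<subseteq> {..<n} \<and> B \<noteq> {} \<and> True}" by auto
    ultimately show ?thesis using sum_diff[OF finPow] by simp
  qed
  have V3: "(\<Sum>B\<in>{B. B \<subseteq> {..<n} \<and> B \<noteq> {} \<and> True}. W B) = real n * harm n"
  proof -
    have "(\<Sum>B\<in>{B. B \<subseteq> {..<n} \<and> B \<noteq> {} \<and> True}. W B)
        = (\<Sum>l=1..n. real (card {B. B \<subseteq> {..<n} \<and> card B = l \<and> True}) * wt n (n - l))"
      unfolding W_def using sum_by_card[of "{..<n}" "\<lambda>c. wt n (n - c)" "\<lambda>_. True"] by simp
    also have "\<dots> = (\<Sum>l=1..n. real n / real l)"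
    proof (rule sum.cong[OF refl])
      fix l assume l: "l \<in> {1..n}"
      have "card {B. B \<subseteq> {..<n} \<and> card B = l \<and> True} = n choose l"
        using n_subsets[of "{..<n}" l] by simp
      then show "real (card {B. B \<subseteq> {..<n} \<and> card B = l \<and> True}) * wt n (n - l) = real n / real l"
        using binom_wt[of l n] l by simp
    qed
    also have "\<dots> = real n * harm n"
      unfolding harm_def by (simp add: sum_distrib_left divide_inverse)
    finally show ?thesis .
  qed
  define Fm where "Fm l = 1 / real ((n - 1) choose (n - l)) * (1 / fact l) *
               (\<Prod>i<l. (real q ^ r - real q ^ i) / (real q - 1))" for l
  have V4: "(\<Sum>B\<in>{B. B \<subseteq> {..<n} \<and> B \<noteq> {} \<and> indepH r h B}. W B) = (\<Sum>l=1..r. Fm l)"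
  proof -
    have "(\<Sum>B\<in>{B. B \<subseteq> {..<n} \<and> B \<noteq> {} \<and> indepH r h B}. W B)
        = (\<Sum>l=1..n. real (card {B. B \<subseteq> {..<n} \<and> card B = l \<and> indepH r h B}) * wt n (n - l))"
      unfolding W_def using sum_by_card[of "{..<n}" "\<lambda>c. wt n (n - c)" "indepH r h"] by simp
    also have "\<dots> = (\<Sum>l=1..n. Fm l)"
    proof (rule sum.cong[OF refl])
      fix l assume l: "l \<in> {1..n}"
      show "real (card {B. B \<subseteq> {..<n} \<and> card B = l \<and> indepH r h B}) * wt n (n - l) = Fm l"
      proof -
        have "wt n (n - l) = 1 / real ((n - 1) choose (n - l))" using wt_eq[of l n] l by simp
        then show ?thesis unfolding IS_real[OF H] Fm_def q_def by simp
      qed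
    qed
    also have "\<dots> = (\<Sum>l=1..r. Fm l)"
    proof (rule sum.mono_neutral_right)
      show "finite {1..n}" by simp
      show "{1..r} \<subseteq> {1..n}" using rn by auto
      show "\<forall>l\<in>{1..n} - {1..r}. Fm l = 0"
      proof
        fix l assume "l \<in> {1..n} - {1..r}"
        then have "r \<in> {..<l}" by auto
        then have "\<exists>a\<in>{..<l}. (real q ^ r - real q ^ a) / (real q - 1) = 0"
          by (intro bexI[of _ r]) simp_all
        then have "(\<Prod>i<l. (real q ^ r - real q ^ i) / (real q - 1)) = 0"
          by (intro prod_zero) simp_all
        then show "Fm l = 0" unfolding Fm_def by simp
      qed
    qed
    finally show ?thesis .
  qed
  have val: "(\<Sum>S\<in>{S. S \<subseteq> {..<n} \<and> \<not> P S}. wt n (card S)) = real n * harm n - (\<Sum>l=1..r. Fm l)"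
    using V1 V2 V3 V4 by simp
  show ?thesis
    using S unfolding val Fm_def stop_eq[symmetric] .
qed


end
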